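(* For each $n\ge0$ there is an isomorphism of $A_n$-bimodules $D_{n+1}\otimes_{A_{n+1}}I_n\cong A_n$, and consequently an isomorphism of $A$-bimodules $D\otimes_A I\cong A$, where $A=\bigoplus_{n\ge0}A_n$, $D=\bigoplus_{n\ge0}D_{n+1}$ and $I=\bigoplus_{n\ge0}I_n$.
   Context: $A_n$ is the nilCoxeter algebra: the unital $\mathbb{Q}$-algebra generated by $Y_1,\dots,Y_{n-1}$ with relations $Y_i^2=0$, $Y_iY_j=Y_jY_i$ for $|i-j|>1$, $Y_iY_{i+1}Y_i=Y_{i+1}Y_iY_{i+1}$. Let $\chi_n:A_n\to A_{n+1}$, $\chi_n(Y_i)=Y_i$; $D_{n+1}$ is $A_{n+1}$ as an $(A_n,A_{n+1})$-bimodule (left action via $\chi_n$, right by multiplication). Let $t_{n+1}:A_{n+1}\to A_n$ be the algebra homomorphism with $t_{n+1}(Y_i)=Y_i$ for $i<n$ and $t_{n+1}(Y_n)=0$. $I_n$ is the $(A_{n+1},A_n)$-bimodule equal to $A_n$ as a right $A_n$-module, with left $A_{n+1}$-action via $t_{n+1}$. An $(A_n,A_k)$-bimodule is regarded as an $A$-bimodule on which $A_i$ acts by $0$ on the left for $i\neq n$ and on the right for $i\ne k$. *)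

theory Defs
  imports Complex_Main "HOL-Algebra.QuotRing"
begin

text \<open>Noncommutative polynomials over Q in the letters 1,2,...: finitely supported
  functions from words (nat lists) to rat. The product is concatenation convolution.\<close>

type_synonym ncpoly = "nat list \<Rightarrow> rat"

definition nc_mult :: "ncpoly \<Rightarrow> ncpoly \<Rightarrow> ncpoly" where
  "nc_mult f g = (\<lambda>w. \<Sum>k\<le>length w. f (take k w) * g (drop k w))"

definition nc_one :: ncpoly where
  "nc_one = (\<lambda>w. if w = [] then 1 else 0)"

definition nc_gen :: "nat \<Rightarrow> ncpoly" where
  "nc_gen i = (\<lambda>w. if w = [i] then 1 else 0)"

definition nc_diff :: "ncpoly \<Rightarrow> ncpoly \<Rightarrow> ncpoly" where
  "nc_diff f g = (\<lambda>w. f w - g w)"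

text \<open>Free algebra on the generators Y_1, ..., Y_(n-1) (letters in {1..<n}).\<close>
definition FA :: "nat \<Rightarrow> ncpoly ring" where
  "FA n = \<lparr>carrier = {f. finite {w. f w \<noteq> 0} \<and> (\<forall>w. f w \<noteq> 0 \<longrightarrow> set w \<subseteq> {1..<n})},
            mult = nc_mult, one = nc_one, zero = (\<lambda>w. 0), add = (\<lambda>f g w. f w + g w)\<rparr>"

definition nilcox_rels :: "nat \<Rightarrow> ncpoly set" where
  "nilcox_rels n =
     {nc_mult (nc_gen i) (nc_gen i) | i. i \<in> {1..<n}}
   \<union> {nc_diff (nc_mult (nc_gen i) (nc_gen j)) (nc_mult (nc_gen j) (nc_gen i)) | i j.
        i \<in> {1..<n} \<and> j \<in> {1..<n} \<and> (i > j + 1 \<or> j > i + 1)}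
   \<union> {nc_diff (nc_mult (nc_mult (nc_gen i) (nc_gen (i+1))) (nc_gen i))
              (nc_mult (nc_mult (nc_gen (i+1)) (nc_gen i)) (nc_gen (i+1))) | i.
        i \<in> {1..<n} \<and> i + 1 \<in> {1..<n}}"

definition nilcox_ideal :: "nat \<Rightarrow> ncpoly set" where
  "nilcox_ideal n = genideal (FA n) (nilcox_rels n)"

text \<open>The nilCoxeter algebra A_n (generators Y_1..Y_(n-1)); A_0 = A_1 = Q.\<close>
definition NC :: "nat \<Rightarrow> ncpoly set ring" where
  "NC n = FA n Quot nilcox_ideal n"

type_synonym ncel = "ncpoly set"

definition rep :: "'a set \<Rightarrow> 'a" where
  "rep C = (SOME f. f \<in> C)"

text \<open>chi_n : A_n \<rightarrow> A_(n+1), induced by Y_i \<mapsto> Y_i (inclusion of free algebras).\<close>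
definition chi :: "nat \<Rightarrow> ncel \<Rightarrow> ncel" where
  "chi n C = a_r_coset (FA (Suc n)) (nilcox_ideal (Suc n)) (rep C)"

text \<open>t_(n+1) : A_(n+1) \<rightarrow> A_n, induced by Y_i \<mapsto> Y_i (i<n), Y_n \<mapsto> 0;
  on the free algebra this kills every word containing the letter n.\<close>
definition kill_letter :: "nat \<Rightarrow> ncpoly \<Rightarrow> ncpoly" where
  "kill_letter n f = (\<lambda>w. if n \<in> set w then 0 else f w)"

definition tmap :: "nat \<Rightarrow> ncel \<Rightarrow> ncel" where
  "tmap n C = a_r_coset (FA n) (nilcox_ideal n) (kill_letter n (rep C))"
  \<comment> \<open>tmap n is t_(n+1) : A_(n+1) \<rightarrow> A_n\<close>

record ('r, 's, 'm) bimod =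
  bcar  :: "'m set"
  badd  :: "'m \<Rightarrow> 'm \<Rightarrow> 'm"
  bzero :: "'m"
  lact  :: "'r \<Rightarrow> 'm \<Rightarrow> 'm"
  ract  :: "'m \<Rightarrow> 's \<Rightarrow> 'm"

definition bimod_iso :: "'r set \<Rightarrow> 's set \<Rightarrow> ('r,'s,'m) bimod \<Rightarrow> ('r,'s,'n) bimod \<Rightarrow> ('m \<Rightarrow> 'n) \<Rightarrow> bool" where
  "bimod_iso P S M N \<phi> \<longleftrightarrow>
     bij_betw \<phi> (bcar M) (bcar N) \<and>
     (\<forall>x\<in>bcar M. \<forall>y\<in>bcar M. \<phi> (badd M x y) = badd N (\<phi> x) (\<phi> y)) \<and>
     (\<forall>a\<in>P. \<forall>x\<in>bcar M. \<phi> (lact M a x) = lact N a (\<phi> x)) \<and>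
     (\<forall>a\<in>S. \<forall>x\<in>bcar M. \<phi> (ract M x a) = ract N (\<phi> x) a)"

text \<open>Free abelian group on bcar M \<times> bcar N: finitely supported integer-valued functions.\<close>
definition tfree :: "('p,'r,'m) bimod \<Rightarrow> ('r,'s,'n) bimod \<Rightarrow> ('m \<times> 'n \<Rightarrow> int) set" where
  "tfree M N = {f. finite {x. f x \<noteq> 0} \<and> {x. f x \<noteq> 0} \<subseteq> bcar M \<times> bcar N}"

definition delta :: "'a \<Rightarrow> 'a \<Rightarrow> int" where
  "delta x = (\<lambda>y. if y = x then 1 else 0)"

definition trels :: "'r set \<Rightarrow> ('p,'r,'m) bimod \<Rightarrow> ('r,'s,'n) bimod \<Rightarrow> ('m \<times> 'n \<Rightarrow> int) set" where
  "trels R M N =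
     {(\<lambda>y. delta (badd M m m', n) y - delta (m, n) y - delta (m', n) y) | m m' n.
        m \<in> bcar M \<and> m' \<in> bcar M \<and> n \<in> bcar N}
   \<union> {(\<lambda>y. delta (m, badd N n n') y - delta (m, n) y - delta (m, n') y) | m n n'.
        m \<in> bcar M \<and> n \<in> bcar N \<and> n' \<in> bcar N}
   \<union> {(\<lambda>y. delta (ract M m r, n) y - delta (m, lact N r n) y) | m r n.
        m \<in> bcar M \<and> r \<in> R \<and> n \<in> bcar N}"

inductive_set tker :: "'r set \<Rightarrow> ('p,'r,'m) bimod \<Rightarrow> ('r,'s,'n) bimod \<Rightarrow> ('m \<times> 'n \<Rightarrow> int) set"
  for R M N where
  tker_gen: "f \<in> trels R M N \<Longrightarrow> f \<in> tker R M N"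
| tker_zero: "(\<lambda>y. 0) \<in> tker R M N"
| tker_diff: "f \<in> tker R M N \<Longrightarrow> g \<in> tker R M N \<Longrightarrow> (\<lambda>y. f y - g y) \<in> tker R M N"

definition tcls :: "'r set \<Rightarrow> ('p,'r,'m) bimod \<Rightarrow> ('r,'s,'n) bimod \<Rightarrow> ('m \<times> 'n \<Rightarrow> int) \<Rightarrow> ('m \<times> 'n \<Rightarrow> int) set" where
  "tcls R M N f = {g \<in> tfree M N. (\<lambda>y. g y - f y) \<in> tker R M N}"

definition push :: "('a \<Rightarrow> 'b) \<Rightarrow> ('a \<Rightarrow> int) \<Rightarrow> ('b \<Rightarrow> int)" where
  "push h f = (\<lambda>y. \<Sum>x\<in>{x. f x \<noteq> 0 \<and> h x = y}. f x)"

definition tensor :: "'r set \<Rightarrow> ('p,'r,'m) bimod \<Rightarrow> ('r,'s,'n) bimod \<Rightarrow> ('p, 's, ('m \<times> 'n \<Rightarrow> int) set) bimod" where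
  "tensor R M N =
     \<lparr>bcar = tcls R M N ` tfree M N,
      badd = (\<lambda>C D. tcls R M N (\<lambda>y. rep C y + rep D y)),
      bzero = tcls R M N (\<lambda>y. 0),
      lact = (\<lambda>p C. tcls R M N (push (\<lambda>(m, n). (lact M p m, n)) (rep C))),
      ract = (\<lambda>C s. tcls R M N (push (\<lambda>(m, n). (m, ract N n s)) (rep C)))\<rparr>"

definition regular :: "('a, 'b) ring_scheme \<Rightarrow> ('a, 'a, 'a) bimod" where
  "regular R = \<lparr>bcar = carrier R, badd = add R, bzero = zero R,
                lact = mult R, ract = mult R\<rparr>"

text \<open>D_(n+1): A_(n+1) as (A_n, A_(n+1))-bimodule, left action via chi_n.\<close>
definition Dmod :: "nat \<Rightarrow> (ncel, ncel, ncel) bimod" where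
  "Dmod n = \<lparr>bcar = carrier (NC (Suc n)), badd = add (NC (Suc n)), bzero = zero (NC (Suc n)),
             lact = (\<lambda>a x. mult (NC (Suc n)) (chi n a) x),
             ract = mult (NC (Suc n))\<rparr>"

text \<open>I_n: A_n as (A_(n+1), A_n)-bimodule, left action via t_(n+1).\<close>
definition Imod :: "nat \<Rightarrow> (ncel, ncel, ncel) bimod" where
  "Imod n = \<lparr>bcar = carrier (NC n), badd = add (NC n), bzero = zero (NC n),
             lact = (\<lambda>a x. mult (NC n) (tmap n a) x),
             ract = mult (NC n)\<rparr>"

text \<open>A = \<Oplus>_n A_n: finitely supported sections, componentwise operations.\<close>
definition Asum_car :: "(nat \<Rightarrow> ncel) set" where
  "Asum_car = {a. (\<forall>n. a n \<in> carrier (NC n)) \<and> finite {n. a n \<noteq> zero (NC n)}}"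

definition Areg :: "(nat \<Rightarrow> ncel, nat \<Rightarrow> ncel, nat \<Rightarrow> ncel) bimod" where
  "Areg = \<lparr>bcar = Asum_car,
           badd = (\<lambda>a b n. add (NC n) (a n) (b n)),
           bzero = (\<lambda>n. zero (NC n)),
           lact = (\<lambda>a b n. mult (NC n) (a n) (b n)),
           ract = (\<lambda>a b n. mult (NC n) (a n) (b n))\<rparr>"

text \<open>D = \<Oplus>_n D_(n+1): component n lies in D_(n+1); A_n acts on it on the left,
  A_(n+1) on the right, all other A_i act by 0.\<close>
definition Dsum :: "(nat \<Rightarrow> ncel, nat \<Rightarrow> ncel, nat \<Rightarrow> ncel) bimod" where
  "Dsum = \<lparr>bcar = {d. (\<forall>n. d n \<in> bcar (Dmod n)) \<and> finite {n. d n \<noteq> bzero (Dmod n)}},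
           badd = (\<lambda>d e n. badd (Dmod n) (d n) (e n)),
           bzero = (\<lambda>n. bzero (Dmod n)),
           lact = (\<lambda>a d n. lact (Dmod n) (a n) (d n)),
           ract = (\<lambda>d a n. ract (Dmod n) (d n) (a (Suc n)))\<rparr>"

text \<open>I = \<Oplus>_n I_n: A_(n+1) acts on component n on the left, A_n on the right.\<close>
definition Isum :: "(nat \<Rightarrow> ncel, nat \<Rightarrow> ncel, nat \<Rightarrow> ncel) bimod" where
  "Isum = \<lparr>bcar = {i. (\<forall>n. i n \<in> bcar (Imod n)) \<and> finite {n. i n \<noteq> bzero (Imod n)}},
           badd = (\<lambda>i j n. badd (Imod n) (i n) (j n)),
           bzero = (\<lambda>n. bzero (Imod n)),
           lact = (\<lambda>a i n. lact (Imod n) (a (Suc n)) (i n)),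
           ract = (\<lambda>i a n. ract (Imod n) (i n) (a n))\<rparr>"

end

theory Submission
  imports Defs
begin


definition supp :: "('a \<Rightarrow> int) \<Rightarrow> 'a set" where "supp g = {x. g x \<noteq> 0}"

locale tens = abelian_group +
  fixes P :: "'p set" and R :: "'r set" and S :: "'s set"
    and M :: "('p,'r,'m) bimod" and N :: "('r,'s,'n) bimod" and T :: "('p,'s,'t) bimod"
    and f :: "'m \<times> 'n \<Rightarrow> 't" and \<psi> :: "'t \<Rightarrow> 'm \<times> 'n"
  assumes T_car: "bcar T = carrier G" and T_add: "badd T = add G"
  and M_add: "m \<in> bcar M \<Longrightarrow> m' \<in> bcar M \<Longrightarrow> badd M m m' \<in> bcar M"
  and N_add: "x \<in> bcar N \<Longrightarrow> x' \<in> bcar N \<Longrightarrow> badd N x x' \<in> bcar N"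
  and M_r: "m \<in> bcar M \<Longrightarrow> r \<in> R \<Longrightarrow> ract M m r \<in> bcar M"
  and N_l: "r \<in> R \<Longrightarrow> x \<in> bcar N \<Longrightarrow> lact N r x \<in> bcar N"
  and M_l: "p \<in> P \<Longrightarrow> m \<in> bcar M \<Longrightarrow> lact M p m \<in> bcar M"
  and N_r: "x \<in> bcar N \<Longrightarrow> s \<in> S \<Longrightarrow> ract N x s \<in> bcar N"
  and f_car: "m \<in> bcar M \<Longrightarrow> x \<in> bcar N \<Longrightarrow> f (m, x) \<in> carrier G"
  and f_addl: "m \<in> bcar M \<Longrightarrow> m' \<in> bcar M \<Longrightarrow> x \<in> bcar N \<Longrightarrow>
      f (badd M m m', x) = f (m, x) \<oplus>\<^bsub>G\<^esub> f (m', x)"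
  and f_addr: "m \<in> bcar M \<Longrightarrow> x \<in> bcar N \<Longrightarrow> x' \<in> bcar N \<Longrightarrow>
      f (m, badd N x x') = f (m, x) \<oplus>\<^bsub>G\<^esub> f (m, x')"
  and f_bal: "m \<in> bcar M \<Longrightarrow> r \<in> R \<Longrightarrow> x \<in> bcar N \<Longrightarrow>
      f (ract M m r, x) = f (m, lact N r x)"
  and f_l: "p \<in> P \<Longrightarrow> m \<in> bcar M \<Longrightarrow> x \<in> bcar N \<Longrightarrow> f (lact M p m, x) = lact T p (f (m, x))"
  and f_r: "s \<in> S \<Longrightarrow> m \<in> bcar M \<Longrightarrow> x \<in> bcar N \<Longrightarrow> f (m, ract N x s) = ract T (f (m, x)) s"
  and T_l: "p \<in> P \<Longrightarrow> t \<in> carrier G \<Longrightarrow> lact T p t \<in> carrier G"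
  and T_ladd: "p \<in> P \<Longrightarrow> t \<in> carrier G \<Longrightarrow> t' \<in> carrier G \<Longrightarrow> lact T p (t \<oplus>\<^bsub>G\<^esub> t') = lact T p t \<oplus>\<^bsub>G\<^esub> lact T p t'"
  and T_r: "s \<in> S \<Longrightarrow> t \<in> carrier G \<Longrightarrow> ract T t s \<in> carrier G"
  and T_radd: "s \<in> S \<Longrightarrow> t \<in> carrier G \<Longrightarrow> t' \<in> carrier G \<Longrightarrow> ract T (t \<oplus>\<^bsub>G\<^esub> t') s = ract T t s \<oplus>\<^bsub>G\<^esub> ract T t' s"
  and psi_car: "t \<in> carrier G \<Longrightarrow> \<psi> t \<in> bcar M \<times> bcar N"
  and psi_f: "t \<in> carrier G \<Longrightarrow> f (\<psi> t) = t"
  and psi_simple: "m \<in> bcar M \<Longrightarrow> x \<in> bcar N \<Longrightarrow>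
      (\<lambda>z. delta (m, x) z - delta (\<psi> (f (m, x))) z) \<in> tker R M N"
  and psi_add: "t \<in> carrier G \<Longrightarrow> t' \<in> carrier G \<Longrightarrow>
      (\<lambda>z. delta (\<psi> (t \<oplus>\<^bsub>G\<^esub> t')) z - delta (\<psi> t) z - delta (\<psi> t') z) \<in> tker R M N"
begin

abbreviation "K \<equiv> tker R M N"
abbreviation "F \<equiv> tfree M N"

lemma K_add: "g \<in> K \<Longrightarrow> h \<in> K \<Longrightarrow> (\<lambda>z. g z + h z) \<in> K"
proof -
  assume "g \<in> K" "h \<in> K"
  then have "(\<lambda>y. (\<lambda>y. 0) y - h y) \<in> K" by (intro tker_diff tker_zero)
  then have "(\<lambda>y. g y - (0 - h y)) \<in> K" using \<open>g \<in> K\<close> by (metis (no_types) tker_diff)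
  then show ?thesis by simp
qed

lemma K_neg: "g \<in> K \<Longrightarrow> (\<lambda>z. - g z) \<in> K"
  using tker_diff[OF tker_zero, of g] by simp

lemma K_diff: "g \<in> K \<Longrightarrow> h \<in> K \<Longrightarrow> (\<lambda>z. g z - h z) \<in> K"
  by (rule tker_diff)

lemma K_cong: "g \<in> K \<Longrightarrow> (\<And>z. g z = h z) \<Longrightarrow> h \<in> K"
  by (metis ext)

lemma F_iff: "g \<in> F \<longleftrightarrow> finite (supp g) \<and> supp g \<subseteq> bcar M \<times> bcar N"
  by (simp add: tfree_def supp_def)

lemma delta_F: "y \<in> bcar M \<times> bcar N \<Longrightarrow> delta y \<in> F"
  unfolding F_iff supp_def delta_def by auto

lemma F_zero: "(\<lambda>z. 0) \<in> F" unfolding F_iff supp_def by auto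

lemma F_add: "g \<in> F \<Longrightarrow> h \<in> F \<Longrightarrow> (\<lambda>z. g z + h z) \<in> F"
proof -
  assume a: "g \<in> F" "h \<in> F"
  have "supp (\<lambda>z. g z + h z) \<subseteq> supp g \<union> supp h" unfolding supp_def by auto
  with a show ?thesis unfolding F_iff by (meson finite_Un finite_subset le_sup_iff subset_trans)
qed

lemma F_diff: "g \<in> F \<Longrightarrow> h \<in> F \<Longrightarrow> (\<lambda>z. g z - h z) \<in> F"
proof -
  assume a: "g \<in> F" "h \<in> F"
  have "supp (\<lambda>z. g z - h z) \<subseteq> supp g \<union> supp h" unfolding supp_def by auto
  with a show ?thesis unfolding F_iff by (meson finite_Un finite_subset le_sup_iff subset_trans)
qed

lemma trels_F: "g \<in> trels R M N \<Longrightarrow> g \<in> F"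
  unfolding trels_def
  by (auto intro!: F_diff delta_F M_add N_add M_r N_l)

lemma K_F: "g \<in> K \<Longrightarrow> g \<in> F"
  by (induction rule: tker.induct) (auto intro: trels_F F_zero F_diff)

definition mu :: "('m \<times> 'n \<Rightarrow> int) \<Rightarrow> nat" where "mu g = (\<Sum>z\<in>supp g. nat \<bar>g z\<bar>)"

lemma mu_super: "finite A \<Longrightarrow> supp g \<subseteq> A \<Longrightarrow> mu g = (\<Sum>z\<in>A. nat \<bar>g z\<bar>)"
  unfolding mu_def by (rule sum.mono_neutral_left) (auto simp: supp_def)

lemma F_induct[consumes 1, case_names zero plus minus]:
  assumes "g \<in> F" and Z: "Q (\<lambda>z. 0)"
    and Pl: "\<And>g y. g \<in> F \<Longrightarrow> y \<in> bcar M \<times> bcar N \<Longrightarrow> Q g \<Longrightarrow> Q (\<lambda>z. g z + delta y z)"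
    and Mi: "\<And>g y. g \<in> F \<Longrightarrow> y \<in> bcar M \<times> bcar N \<Longrightarrow> Q g \<Longrightarrow> Q (\<lambda>z. g z - delta y z)"
  shows "Q g"
proof -
  have "\<forall>g. mu g = k \<longrightarrow> g \<in> F \<longrightarrow> Q g" for k
  proof (induction k rule: less_induct)
    case (less k)
    show ?case
    proof (intro allI impI)
      fix g assume mk: "mu g = k" and gF: "g \<in> F"
      show "Q g"
      proof (cases "supp g = {}")
        case True
        then have "g = (\<lambda>z. 0)" by (auto simp: supp_def)
        then show ?thesis using Z by simp
      next
        case False
        then obtain y where y: "y \<in> supp g" by blast
        have fin: "finite (supp g)" and sub: "supp g \<subseteq> bcar M \<times> bcar N" using gF by (auto simp: F_iff)
        have yc: "y \<in> bcar M \<times> bcar N" using y sub by auto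
        show ?thesis
        proof (cases "g y > 0")
          case True
          define g' where "g' = (\<lambda>z. g z - delta y z)"
          have g'F: "g' \<in> F" unfolding g'_def by (rule F_diff[OF gF delta_F[OF yc]])
          have "supp g' \<subseteq> supp g" using y by (auto simp: supp_def g'_def delta_def)
          then have "mu g' = (\<Sum>z\<in>supp g. nat \<bar>g' z\<bar>)" using fin by (rule mu_super[rotated])
          also have "\<dots> < (\<Sum>z\<in>supp g. nat \<bar>g z\<bar>)"
            by (rule sum_strict_mono_ex1[OF fin]) (use y True in \<open>auto simp: g'_def delta_def\<close>)
          finally have "mu g' < k" using mk by (simp add: mu_def)
          then have "Q g'" using less g'F by blast
          then have "Q (\<lambda>z. g' z + delta y z)" by (rule Pl[OF g'F yc])
          then show ?thesis by (simp add: g'_def)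
        next
          case False
          then have neg: "g y < 0" using y by (auto simp: supp_def)
          define g' where "g' = (\<lambda>z. g z + delta y z)"
          have g'F: "g' \<in> F" unfolding g'_def by (rule F_add[OF gF delta_F[OF yc]])
          have "supp g' \<subseteq> supp g" using y by (auto simp: supp_def g'_def delta_def)
          then have "mu g' = (\<Sum>z\<in>supp g. nat \<bar>g' z\<bar>)" using fin by (rule mu_super[rotated])
          also have "\<dots> < (\<Sum>z\<in>supp g. nat \<bar>g z\<bar>)"
            by (rule sum_strict_mono_ex1[OF fin]) (use y neg in \<open>auto simp: g'_def delta_def\<close>)
          finally have "mu g' < k" using mk by (simp add: mu_def)
          then have "Q g'" using less g'F by blast
          then have "Q (\<lambda>z. g' z - delta y z)" by (rule Mi[OF g'F yc])
          then show ?thesis by (simp add: g'_def)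
        qed
      qed
    qed
  qed
  then show ?thesis using assms(1) by blast
qed

lemma add_pow_int0[simp]: "add_pow G (0::int) x = \<zero>"
  by (simp add: add_pow_def)

definition L :: "('m \<times> 'n \<Rightarrow> int) \<Rightarrow> 't" where
  "L g = finsum G (\<lambda>z. add_pow G (g z) (f z)) (supp g)"

lemma fz_car: "z \<in> bcar M \<times> bcar N \<Longrightarrow> f z \<in> carrier G"
  using f_car by (cases z) auto

lemma L_super: "finite A \<Longrightarrow> supp g \<subseteq> A \<Longrightarrow> A \<subseteq> bcar M \<times> bcar N \<Longrightarrow>
   L g = (\<Oplus>z\<in>A. add_pow G (g z) (f z))"
  unfolding L_def
  by (rule add.finprod_mono_neutral_cong_left) (auto simp: supp_def intro!: fz_car)

lemma L_car: "g \<in> F \<Longrightarrow> L g \<in> carrier G"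
  unfolding L_def F_iff by (auto intro!: finsum_closed fz_car)

lemma L_zero: "L (\<lambda>z. 0) = \<zero>"
  by (simp add: L_def supp_def)

lemma L_plus: "g \<in> F \<Longrightarrow> h \<in> F \<Longrightarrow> L (\<lambda>z. g z + h z) = L g \<oplus> L h"
proof -
  assume gF: "g \<in> F" and hF: "h \<in> F"
  define A where "A = supp g \<union> supp h"
  have A: "finite A" "A \<subseteq> bcar M \<times> bcar N" using gF hF by (auto simp: A_def F_iff)
  have s: "supp (\<lambda>z. g z + h z) \<subseteq> A" by (auto simp: A_def supp_def)
  have "L (\<lambda>z. g z + h z) = (\<Oplus>z\<in>A. add_pow G (g z + h z) (f z))"
    by (rule L_super[OF A(1) s A(2)])
  also have "\<dots> = (\<Oplus>z\<in>A. add_pow G (g z) (f z) \<oplus> add_pow G (h z) (f z))"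
    by (rule finsum_cong') (use A in \<open>auto intro!: add.int_pow_mult fz_car\<close>)
  also have "\<dots> = (\<Oplus>z\<in>A. add_pow G (g z) (f z)) \<oplus> (\<Oplus>z\<in>A. add_pow G (h z) (f z))"
    by (rule finsum_addf) (use A in \<open>auto intro!: fz_car\<close>)
  also have "\<dots> = L g \<oplus> L h"
    using L_super[OF A(1) _ A(2), of g] L_super[OF A(1) _ A(2), of h] by (auto simp: A_def)
  finally show ?thesis .
qed

lemma solve: "y \<in> carrier G \<Longrightarrow> z \<in> carrier G \<Longrightarrow> x = y \<oplus> z \<Longrightarrow> y = x \<ominus> z"
  by (simp add: a_minus_def a_assoc r_neg)

lemma L_minus: "g \<in> F \<Longrightarrow> h \<in> F \<Longrightarrow> L (\<lambda>z. g z - h z) = L g \<ominus> L h"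
proof -
  assume gF: "g \<in> F" and hF: "h \<in> F"
  have "L g = L (\<lambda>z. (g z - h z) + h z)" by simp
  also have "\<dots> = L (\<lambda>z. g z - h z) \<oplus> L h" by (rule L_plus[OF F_diff[OF gF hF] hF])
  finally show ?thesis by (intro solve L_car F_diff gF hF)
qed

lemma L_delta: "y \<in> bcar M \<times> bcar N \<Longrightarrow> L (delta y) = f y"
proof -
  assume y: "y \<in> bcar M \<times> bcar N"
  have "supp (delta y) = {y}" by (auto simp: supp_def delta_def)
  have e1: "add_pow G (1::int) (f y) = f y" using add.int_pow_1[OF fz_car[OF y]] .
  have "L (delta y) = finsum G (\<lambda>z. add_pow G (delta y z) (f z)) {y}"
    unfolding L_def using \<open>supp (delta y) = {y}\<close> by simp
  also have "\<dots> = add_pow G (delta y y) (f y)"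
    using finsum_insert[of "{}" y "\<lambda>z. add_pow G (delta y z) (f z)"] fz_car[OF y]
    by (simp add: add.int_pow_closed)
  finally show ?thesis by (simp add: delta_def e1)
qed

lemma L_trels: "g \<in> trels R M N \<Longrightarrow> L g = \<zero>"
proof -
  assume "g \<in> trels R M N"
  then consider (a) m m' x where "m \<in> bcar M" "m' \<in> bcar M" "x \<in> bcar N"
      "g = (\<lambda>y. delta (badd M m m', x) y - delta (m, x) y - delta (m', x) y)"
    | (b) m x x' where "m \<in> bcar M" "x \<in> bcar N" "x' \<in> bcar N"
      "g = (\<lambda>y. delta (m, badd N x x') y - delta (m, x) y - delta (m, x') y)"
    | (c) m r x where "m \<in> bcar M" "r \<in> R" "x \<in> bcar N"
      "g = (\<lambda>y. delta (ract M m r, x) y - delta (m, lact N r x) y)"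
    unfolding trels_def by blast
  then show ?thesis
  proof cases
    case a
    have d: "delta (badd M m m', x) \<in> F" "delta (m, x) \<in> F" "delta (m', x) \<in> F"
      using a by (auto intro!: delta_F M_add)
    have "L g = f (badd M m m', x) \<ominus> f (m, x) \<ominus> f (m', x)"
      unfolding a(4) using d a
      by (simp add: L_minus F_diff L_delta M_add)
    also have "\<dots> = \<zero>" using a f_car
      by (simp add: f_addl a_minus_def a_assoc r_neg minus_add a_comm add.m_lcomm)
    finally show ?thesis .
  next
    case b
    have d: "delta (m, badd N x x') \<in> F" "delta (m, x) \<in> F" "delta (m, x') \<in> F"
      using b by (auto intro!: delta_F N_add)
    have "L g = f (m, badd N x x') \<ominus> f (m, x) \<ominus> f (m, x')"
      unfolding b(4) using d b
      by (simp add: L_minus F_diff L_delta N_add)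
    also have "\<dots> = \<zero>" using b f_car
      by (simp add: f_addr a_minus_def a_assoc r_neg minus_add a_comm add.m_lcomm)
    finally show ?thesis .
  next
    case c
    have d: "delta (ract M m r, x) \<in> F" "delta (m, lact N r x) \<in> F"
      using c by (auto intro!: delta_F M_r N_l)
    have "L g = f (ract M m r, x) \<ominus> f (m, lact N r x)"
      unfolding c(4) using d c
      by (simp add: L_minus L_delta M_r N_l)
    also have "\<dots> = \<zero>" using c f_car N_l
      by (simp add: f_bal a_minus_def r_neg)
    finally show ?thesis .
  qed
qed

lemma L_K: "g \<in> K \<Longrightarrow> L g = \<zero>"
proof (induction rule: tker.induct)
  case (tker_gen f) then show ?case by (rule L_trels)
next
  case tker_zero then show ?case by (rule L_zero)
next
  case (tker_diff g h)
  then show ?case by (simp add: L_minus K_F a_minus_def)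
qed

lemma psiF: "t \<in> carrier G \<Longrightarrow> delta (\<psi> t) \<in> F"
  by (rule delta_F[OF psi_car])

lemma main_approx: "g \<in> F \<Longrightarrow> (\<lambda>z. g z - delta (\<psi> (L g)) z) \<in> K"
proof (induction rule: F_induct)
  case zero
  have "(\<lambda>z. delta (\<psi> (\<zero> \<oplus> \<zero>)) z - delta (\<psi> \<zero>) z - delta (\<psi> \<zero>) z) \<in> K"
    by (rule psi_add) auto
  then show ?case by (rule K_cong) (simp add: L_zero)
next
  case (plus g y)
  have Lg: "L g \<in> carrier G" and fy: "f y \<in> carrier G" using plus L_car fz_car by auto
  have e: "L (\<lambda>z. g z + delta y z) = L g \<oplus> f y"
    using plus by (simp add: L_plus delta_F L_delta)
  have s: "(\<lambda>z. delta y z - delta (\<psi> (f y)) z) \<in> K" using psi_simple plus(2) by (cases y) auto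
  have "(\<lambda>z. ((g z - delta (\<psi> (L g)) z) + (delta y z - delta (\<psi> (f y)) z))
       - (delta (\<psi> (L g \<oplus> f y)) z - delta (\<psi> (L g)) z - delta (\<psi> (f y)) z)) \<in> K"
    by (intro K_diff K_add plus s psi_add Lg fy)
  then show ?case by (rule K_cong) (simp add: e)
next
  case (minus g y)
  have Lg: "L g \<in> carrier G" and fy: "f y \<in> carrier G" using minus L_car fz_car by auto
  define u where "u = L g \<ominus> f y"
  have u: "u \<in> carrier G" using Lg fy by (simp add: u_def)
  have Lgu: "L g = u \<oplus> f y" using Lg fy by (simp add: u_def a_minus_def a_assoc l_neg)
  have e: "L (\<lambda>z. g z - delta y z) = u"
    using minus by (simp add: L_minus delta_F L_delta u_def)
  have s: "(\<lambda>z. delta y z - delta (\<psi> (f y)) z) \<in> K" using psi_simple minus(2) by (cases y) auto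
  have a: "(\<lambda>z. delta (\<psi> (u \<oplus> f y)) z - delta (\<psi> u) z - delta (\<psi> (f y)) z) \<in> K"
    by (rule psi_add[OF u fy])
  have "(\<lambda>z. ((g z - delta (\<psi> (L g)) z) - (delta y z - delta (\<psi> (f y)) z))
       + (delta (\<psi> (u \<oplus> f y)) z - delta (\<psi> u) z - delta (\<psi> (f y)) z)) \<in> K"
    by (intro K_diff K_add minus s a)
  then show ?case by (rule K_cong) (simp add: e Lgu)
qed

abbreviation "tc \<equiv> tcls R M N"

lemma tcls_self: "g \<in> F \<Longrightarrow> g \<in> tc g"
  unfolding tcls_def using tker_zero by simp

lemma rep_tcls: "g \<in> F \<Longrightarrow> rep (tc g) \<in> F \<and> (\<lambda>z. rep (tc g) z - g z) \<in> K"
proof -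
  assume "g \<in> F"
  then have "rep (tc g) \<in> tc g" unfolding rep_def by (rule someI[of "\<lambda>x. x \<in> tc g" g, OF tcls_self])
  then show ?thesis unfolding tcls_def by simp
qed

lemma tcls_eq: "g \<in> F \<Longrightarrow> h \<in> F \<Longrightarrow> (\<lambda>z. g z - h z) \<in> K \<Longrightarrow> tc g = tc h"
proof -
  assume g: "g \<in> F" and h: "h \<in> F" and gh: "(\<lambda>z. g z - h z) \<in> K"
  have 1: "(\<lambda>z. k z - h z) \<in> K" if "(\<lambda>z. k z - g z) \<in> K" for k
    using K_add[OF that gh] by (rule K_cong) simp
  have 2: "(\<lambda>z. k z - g z) \<in> K" if "(\<lambda>z. k z - h z) \<in> K" for k
    using K_diff[OF that gh] by (rule K_cong) simp
  show ?thesis unfolding tcls_def using 1 2 by blast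
qed

lemma L_rep: "g \<in> F \<Longrightarrow> L (rep (tc g)) = L g"
proof -
  assume g: "g \<in> F"
  from rep_tcls[OF g] have r: "rep (tc g) \<in> F" and k: "(\<lambda>z. rep (tc g) z - g z) \<in> K" by auto
  have "L (rep (tc g)) \<ominus> L g = \<zero>" using L_K[OF k] L_minus[OF r g] by simp
  then show ?thesis using L_car[OF r] L_car[OF g]
    by (metis add.inv_solve_right' a_minus_def l_zero zero_closed)
qed

lemma push_super: "finite A \<Longrightarrow> supp g \<subseteq> A \<Longrightarrow> push h g z = sum g {x\<in>A. h x = z}"
  unfolding push_def by (rule sum.mono_neutral_left) (auto simp: supp_def)

lemma push_plus: "g \<in> F \<Longrightarrow> g' \<in> F \<Longrightarrow> push h (\<lambda>z. g z + g' z) = (\<lambda>z. push h g z + push h g' z)"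
proof
  fix z assume g: "g \<in> F" and g': "g' \<in> F"
  define A where "A = supp g \<union> supp g'"
  have A: "finite A" using g g' by (auto simp: A_def F_iff)
  have s: "supp (\<lambda>z. g z + g' z) \<subseteq> A" by (auto simp: A_def supp_def)
  have sg: "supp g \<subseteq> A" "supp g' \<subseteq> A" by (auto simp: A_def)
  show "push h (\<lambda>z. g z + g' z) z = push h g z + push h g' z"
    unfolding push_super[OF A s] push_super[OF A sg(1)] push_super[OF A sg(2)]
    by (simp add: sum.distrib)
qed

lemma push_minus: "g \<in> F \<Longrightarrow> g' \<in> F \<Longrightarrow> push h (\<lambda>z. g z - g' z) = (\<lambda>z. push h g z - push h g' z)"
proof
  fix z assume g: "g \<in> F" and g': "g' \<in> F"
  define A where "A = supp g \<union> supp g'"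
  have A: "finite A" using g g' by (auto simp: A_def F_iff)
  have s: "supp (\<lambda>z. g z - g' z) \<subseteq> A" by (auto simp: A_def supp_def)
  have sg: "supp g \<subseteq> A" "supp g' \<subseteq> A" by (auto simp: A_def)
  show "push h (\<lambda>z. g z - g' z) z = push h g z - push h g' z"
    unfolding push_super[OF A s] push_super[OF A sg(1)] push_super[OF A sg(2)]
    by (simp add: sum_subtractf)
qed

lemma push_delta: "push h (delta y) = delta (h y)"
proof
  fix z
  have "{x. delta y x \<noteq> 0 \<and> h x = z} = (if h y = z then {y} else {})"
    by (auto simp: delta_def)
  then show "push h (delta y) z = delta (h y) z"
    by (simp add: push_def delta_def)
qed

lemma push_zero: "push h (\<lambda>z. 0) = (\<lambda>z. 0)"
  by (simp add: push_def)

lemma push_F: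
  assumes hc: "\<And>y. y \<in> bcar M \<times> bcar N \<Longrightarrow> h y \<in> bcar M \<times> bcar N"
  shows "g \<in> F \<Longrightarrow> push h g \<in> F"
proof (induction rule: F_induct)
  case zero then show ?case by (simp add: push_zero F_zero)
next
  case (plus g y) then show ?case
    by (simp add: push_plus delta_F push_delta F_add hc)
next
  case (minus g y) then show ?case
    by (simp add: push_minus delta_F push_delta F_diff hc)
qed

lemma L_push:
  assumes hc: "\<And>y. y \<in> bcar M \<times> bcar N \<Longrightarrow> h y \<in> bcar M \<times> bcar N"
    and ac: "\<And>t. t \<in> carrier G \<Longrightarrow> act t \<in> carrier G"
    and aa: "\<And>t t'. t \<in> carrier G \<Longrightarrow> t' \<in> carrier G \<Longrightarrow> act (t \<oplus> t') = act t \<oplus> act t'"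
    and fh: "\<And>y. y \<in> bcar M \<times> bcar N \<Longrightarrow> f (h y) = act (f y)"
  shows "g \<in> F \<Longrightarrow> L (push h g) = act (L g)"
proof -
  have am: "act (a \<ominus> b) = act a \<ominus> act b" if "a \<in> carrier G" "b \<in> carrier G" for a b
  proof -
    have "act a = act ((a \<ominus> b) \<oplus> b)" using that by (simp add: a_minus_def a_assoc l_neg)
    also have "\<dots> = act (a \<ominus> b) \<oplus> act b" using that by (simp add: aa)
    finally show ?thesis using that by (intro solve ac) auto
  qed
  have a0: "act \<zero> = \<zero>" using am[of \<zero> \<zero>] ac[of \<zero>] by (simp add: a_minus_def r_neg)
  show "g \<in> F \<Longrightarrow> L (push h g) = act (L g)"
  proof (induction rule: F_induct)
    case zero then show ?case by (simp add: push_zero L_zero a0)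
  next
    case (plus g y)
    have pF: "push h g \<in> F" using push_F[OF hc plus(1)] .
    show ?case using plus pF
      by (simp add: push_plus delta_F push_delta L_plus L_delta hc fh aa L_car fz_car)
  next
    case (minus g y)
    have pF: "push h g \<in> F" using push_F[OF hc minus(1)] .
    show ?case using minus pF
      by (simp add: push_minus delta_F push_delta L_minus L_delta hc fh am L_car fz_car)
  qed
qed

theorem iso: "\<exists>\<phi>. bimod_iso P S (tensor R M N) T \<phi>"
proof (intro exI)
  let ?\<Phi> = "\<lambda>C. L (rep C)"
  have Phi_tc: "?\<Phi> (tc g) = L g" if "g \<in> F" for g using L_rep[OF that] .
  have bij: "bij_betw ?\<Phi> (tc ` F) (carrier G)"
  proof (rule bij_betw_imageI)
    show "inj_on ?\<Phi> (tc ` F)"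
    proof (rule inj_onI)
      fix C D assume "C \<in> tc ` F" "D \<in> tc ` F" and e: "?\<Phi> C = ?\<Phi> D"
      then obtain g h where g: "g \<in> F" "C = tc g" and h: "h \<in> F" "D = tc h" by blast
      have Le: "L g = L h" using e g h Phi_tc by simp
      have "(\<lambda>z. (g z - delta (\<psi> (L g)) z) - (h z - delta (\<psi> (L h)) z)) \<in> K"
        by (intro K_diff main_approx g h)
      then have "(\<lambda>z. g z - h z) \<in> K" by (rule K_cong) (simp add: Le)
      then show "C = D" using g h tcls_eq by simp
    qed
    show "?\<Phi> ` tc ` F = carrier G"
    proof
      show "?\<Phi> ` tc ` F \<subseteq> carrier G" using Phi_tc L_car by auto
      show "carrier G \<subseteq> ?\<Phi> ` tc ` F"
      proof
        fix t assume t: "t \<in> carrier G"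
        have "?\<Phi> (tc (delta (\<psi> t))) = t"
          using Phi_tc[OF psiF[OF t]] L_delta[OF psi_car[OF t]] psi_f[OF t] by simp
        then show "t \<in> ?\<Phi> ` tc ` F" using psiF[OF t] by (metis image_eqI)
      qed
    qed
  qed
  show "bimod_iso P S (tensor R M N) T ?\<Phi>"
    unfolding bimod_iso_def
  proof (intro conjI ballI)
    show "bij_betw ?\<Phi> (bcar (tensor R M N)) (bcar T)"
      using bij by (simp add: tensor_def T_car)
  next
    fix x y assume "x \<in> bcar (tensor R M N)" "y \<in> bcar (tensor R M N)"
    then obtain g h where g: "g \<in> F" "x = tc g" and h: "h \<in> F" "y = tc h"
      by (auto simp: tensor_def)
    have rg: "rep x \<in> F" "rep y \<in> F" using rep_tcls g h by auto
    show "?\<Phi> (badd (tensor R M N) x y) = badd T (?\<Phi> x) (?\<Phi> y)"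
      using rg by (simp add: tensor_def T_add Phi_tc F_add L_plus)
  next
    fix p x assume p: "p \<in> P" and "x \<in> bcar (tensor R M N)"
    then obtain g where g: "g \<in> F" "x = tc g" by (auto simp: tensor_def)
    have rg: "rep x \<in> F" using rep_tcls g by auto
    let ?h = "\<lambda>(m, n). (lact M p m, n)"
    have hc: "\<And>y. y \<in> bcar M \<times> bcar N \<Longrightarrow> ?h y \<in> bcar M \<times> bcar N" using M_l p by auto
    have "L (push ?h (rep x)) = lact T p (L (rep x))"
      by (rule L_push[OF hc _ _ _ rg]) (use p f_l T_l T_ladd in auto)
    then show "?\<Phi> (lact (tensor R M N) p x) = lact T p (?\<Phi> x)"
      using push_F[OF hc rg] by (simp add: tensor_def Phi_tc)
  next
    fix s x assume s: "s \<in> S" and "x \<in> bcar (tensor R M N)"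
    then obtain g where g: "g \<in> F" "x = tc g" by (auto simp: tensor_def)
    have rg: "rep x \<in> F" using rep_tcls g by auto
    let ?h = "\<lambda>(m, n). (m, ract N n s)"
    have hc: "\<And>y. y \<in> bcar M \<times> bcar N \<Longrightarrow> ?h y \<in> bcar M \<times> bcar N" using N_r s by auto
    have "L (push ?h (rep x)) = ract T (L (rep x)) s"
      by (rule L_push[OF hc _ _ _ rg]) (use s f_r T_r T_radd in auto)
    then show "?\<Phi> (ract (tensor R M N) x s) = ract T (?\<Phi> x) s"
      using push_F[OF hc rg] by (simp add: tensor_def Phi_tc)
  qed
qed

end


lemma FA_simps[simp]: "mult (FA k) = nc_mult" "one (FA k) = nc_one" "zero (FA k) = (\<lambda>w. 0)"
  "add (FA k) = (\<lambda>f g w. f w + g w)"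
  by (simp_all add: FA_def)

lemma FA_car: "f \<in> carrier (FA k) \<longleftrightarrow> finite {w. f w \<noteq> 0} \<and> (\<forall>w. f w \<noteq> 0 \<longrightarrow> set w \<subseteq> {1..<k})"
  by (simp add: FA_def)

lemma nc_assoc: "nc_mult (nc_mult f g) h = nc_mult f (nc_mult g h)"
proof (rule ext)
  fix w :: "nat list"
  define L where "L = length w"
  define G where "G j k = f (take j w) * g (take (k - j) (drop j w)) * h (drop k w)" for j k
  have "nc_mult (nc_mult f g) h w = (\<Sum>k\<le>L. \<Sum>j\<le>k. G j k)"
    unfolding nc_mult_def G_def L_def
    by (auto simp: sum_distrib_right min_def drop_take intro!: sum.cong)
  also have "\<dots> = (\<Sum>k\<le>L. \<Sum>j\<in>{j\<in>{..L}. j \<le> k}. G j k)"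
    by (rule sum.cong) (auto intro!: sum.cong)
  also have "\<dots> = (\<Sum>j\<le>L. \<Sum>k\<in>{k\<in>{..L}. j \<le> k}. G j k)"
    by (rule sum.swap_restrict) auto
  also have "\<dots> = (\<Sum>j\<le>L. \<Sum>i\<le>L - j. G j (j + i))"
  proof (rule sum.cong[OF refl])
    fix j assume "j \<in> {..L}"
    show "(\<Sum>k\<in>{k\<in>{..L}. j \<le> k}. G j k) = (\<Sum>i\<le>L - j. G j (j + i))"
      by (rule sum.reindex_bij_witness[where i="\<lambda>i. j + i" and j="\<lambda>k. k - j"]) (use \<open>j \<in> {..L}\<close> in auto)
  qed
  also have "\<dots> = nc_mult f (nc_mult g h) w"
    unfolding nc_mult_def G_def L_def
    by (auto simp: sum_distrib_left mult.assoc add.commute intro!: sum.cong)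
  finally show "nc_mult (nc_mult f g) h w = nc_mult f (nc_mult g h) w" .
qed

lemma nc_one_l: "nc_mult nc_one f = f"
proof
  fix w :: "nat list"
  have "nc_mult nc_one f w = (\<Sum>k\<in>{..length w}. if k = 0 then f w else 0)"
    unfolding nc_mult_def nc_one_def by (rule sum.cong) auto
  then show "nc_mult nc_one f w = f w" by simp
qed

lemma nc_one_r: "nc_mult f nc_one = f"
proof
  fix w :: "nat list"
  have "nc_mult f nc_one w = (\<Sum>k\<in>{..length w}. if k = length w then f w else 0)"
    unfolding nc_mult_def nc_one_def by (rule sum.cong) auto
  then show "nc_mult f nc_one w = f w" by simp
qed

lemma nc_distl: "nc_mult (\<lambda>w. f w + g w) h = (\<lambda>w. nc_mult f h w + nc_mult g h w)"
  unfolding nc_mult_def by (auto simp: distrib_right sum.distrib)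

lemma nc_distr: "nc_mult h (\<lambda>w. f w + g w) = (\<lambda>w. nc_mult h f w + nc_mult h g w)"
  unfolding nc_mult_def by (auto simp: distrib_left sum.distrib)

lemma nc_mult_nz: "nc_mult f g w \<noteq> 0 \<Longrightarrow> \<exists>k. f (take k w) \<noteq> 0 \<and> g (drop k w) \<noteq> 0"
  unfolding nc_mult_def by (metis (no_types, lifting) mult_eq_0_iff sum.neutral)

lemma nc_mult_car: "f \<in> carrier (FA k) \<Longrightarrow> g \<in> carrier (FA k) \<Longrightarrow> nc_mult f g \<in> carrier (FA k)"
proof -
  assume f: "f \<in> carrier (FA k)" and g: "g \<in> carrier (FA k)"
  have "{w. nc_mult f g w \<noteq> 0} \<subseteq> (\<lambda>(u, v). u @ v) ` ({w. f w \<noteq> 0} \<times> {w. g w \<noteq> 0})"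
  proof
    fix w assume "w \<in> {w. nc_mult f g w \<noteq> 0}"
    then obtain j where "f (take j w) \<noteq> 0" "g (drop j w) \<noteq> 0" using nc_mult_nz[of f g w] by auto
    then show "w \<in> (\<lambda>(u, v). u @ v) ` ({w. f w \<noteq> 0} \<times> {w. g w \<noteq> 0})"
      by (intro image_eqI[of _ _ "(take j w, drop j w)"]) auto
  qed
  moreover have "finite ((\<lambda>(u, v). u @ v) ` ({w. f w \<noteq> 0} \<times> {w. g w \<noteq> 0}))"
    using f g by (auto simp: FA_car)
  moreover have "set w \<subseteq> {1..<k}" if nz: "nc_mult f g w \<noteq> 0" for w
  proof -
    obtain j where "f (take j w) \<noteq> 0" "g (drop j w) \<noteq> 0" using nc_mult_nz[OF nz] by blast
    then have "set (take j w) \<subseteq> {1..<k}" "set (drop j w) \<subseteq> {1..<k}" using f g by (auto simp: FA_car)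
    then show ?thesis by (metis append_take_drop_id set_append Un_subset_iff)
  qed
  ultimately show ?thesis by (auto simp: FA_car intro: finite_subset)
qed

lemma FA_abelian: "abelian_group (FA k)"
proof (rule abelian_groupI)
  fix x y assume "x \<in> carrier (FA k)" "y \<in> carrier (FA k)"
  moreover have "{w. x w + y w \<noteq> 0} \<subseteq> {w. x w \<noteq> 0} \<union> {w. y w \<noteq> 0}" by auto
  ultimately show "x \<oplus>\<^bsub>FA k\<^esub> y \<in> carrier (FA k)"
    by (auto simp: FA_car intro: finite_subset)
next
  show "\<zero>\<^bsub>FA k\<^esub> \<in> carrier (FA k)" by (simp add: FA_car)
next
  fix x assume x: "x \<in> carrier (FA k)"
  show "\<exists>y\<in>carrier (FA k). y \<oplus>\<^bsub>FA k\<^esub> x = \<zero>\<^bsub>FA k\<^esub>"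
    by (rule bexI[of _ "\<lambda>w. - x w"]) (use x in \<open>auto simp: FA_car\<close>)
qed (auto simp: add.assoc add.commute)

lemma FA_ring: "ring (FA k)"
proof (rule ringI)
  show "abelian_group (FA k)" by (rule FA_abelian)
  show "monoid (FA k)"
  proof (rule monoidI)
    show "\<one>\<^bsub>FA k\<^esub> \<in> carrier (FA k)" by (auto simp: FA_car nc_one_def)
  qed (auto simp: nc_mult_car nc_assoc nc_one_l nc_one_r)
qed (auto simp: nc_distl nc_distr)



lemma FA_mono: "f \<in> carrier (FA n) \<Longrightarrow> f \<in> carrier (FA (Suc n))"
proof -
  have "{1..<n} \<subseteq> {1..<Suc n}" by auto
  then show "f \<in> carrier (FA n) \<Longrightarrow> f \<in> carrier (FA (Suc n))" unfolding FA_car by blast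
qed

lemma FA_uminus: "x \<in> carrier (FA k) \<Longrightarrow> \<ominus>\<^bsub>FA k\<^esub> x = (\<lambda>w. - x w)"
proof -
  assume x: "x \<in> carrier (FA k)"
  interpret abelian_group "FA k" by (rule FA_abelian)
  have c: "(\<lambda>w. - x w) \<in> carrier (FA k)" using x by (auto simp: FA_car)
  show ?thesis by (rule minus_equality) (use x c in auto)
qed

lemma FA_minus: "x \<in> carrier (FA k) \<Longrightarrow> y \<in> carrier (FA k) \<Longrightarrow> x \<ominus>\<^bsub>FA k\<^esub> y = (\<lambda>w. x w - y w)"
  by (simp add: a_minus_def FA_uminus)

lemma gen_car: "i \<in> {1..<k} \<Longrightarrow> nc_gen i \<in> carrier (FA k)"
  by (auto simp: FA_car nc_gen_def)

lemma diff_car: "f \<in> carrier (FA k) \<Longrightarrow> g \<in> carrier (FA k) \<Longrightarrow> nc_diff f g \<in> carrier (FA k)"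
proof -
  assume f: "f \<in> carrier (FA k)" and g: "g \<in> carrier (FA k)"
  have "{w. nc_diff f g w \<noteq> 0} \<subseteq> {w. f w \<noteq> 0} \<union> {w. g w \<noteq> 0}" by (auto simp: nc_diff_def)
  with f g show ?thesis by (auto simp: FA_car nc_diff_def intro: finite_subset)
qed

lemma rels_car: "nilcox_rels k \<subseteq> carrier (FA k)"
  unfolding nilcox_rels_def by (auto intro!: nc_mult_car gen_car diff_car)

lemma I_ideal: "ideal (nilcox_ideal k) (FA k)"
  unfolding nilcox_ideal_def by (rule ring.genideal_ideal[OF FA_ring rels_car])

lemma NC_ring: "ring (NC k)"
  unfolding NC_def by (rule ideal.quotient_is_ring[OF I_ideal])

lemma NC_simps: "carrier (NC k) = a_rcosets\<^bsub>FA k\<^esub> (nilcox_ideal k)"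
  "mult (NC k) = rcoset_mult (FA k) (nilcox_ideal k)"
  "one (NC k) = nilcox_ideal k +>\<^bsub>FA k\<^esub> nc_one"
  "zero (NC k) = nilcox_ideal k"
  "add (NC k) = set_add (FA k)"
  by (simp_all add: NC_def FactRing_def)

lemma NC_cosetE: "C \<in> carrier (NC k) \<Longrightarrow> \<exists>x\<in>carrier (FA k). C = nilcox_ideal k +>\<^bsub>FA k\<^esub> x"
  by (auto simp: NC_simps A_RCOSETS_def RCOSETS_def a_r_coset_def)

lemma coset_car: "x \<in> carrier (FA k) \<Longrightarrow> nilcox_ideal k +>\<^bsub>FA k\<^esub> x \<in> carrier (NC k)"
  by (auto simp: NC_simps A_RCOSETS_def RCOSETS_def a_r_coset_def)

lemma NC_add: "x \<in> carrier (FA k) \<Longrightarrow> y \<in> carrier (FA k) \<Longrightarrow>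
  (nilcox_ideal k +>\<^bsub>FA k\<^esub> x) \<oplus>\<^bsub>NC k\<^esub> (nilcox_ideal k +>\<^bsub>FA k\<^esub> y) = nilcox_ideal k +>\<^bsub>FA k\<^esub> (\<lambda>w. x w + y w)"
  using ideal.a_rcos_sum[OF I_ideal, of x k y] by (simp add: NC_simps)

lemma NC_mult: "x \<in> carrier (FA k) \<Longrightarrow> y \<in> carrier (FA k) \<Longrightarrow>
  (nilcox_ideal k +>\<^bsub>FA k\<^esub> x) \<otimes>\<^bsub>NC k\<^esub> (nilcox_ideal k +>\<^bsub>FA k\<^esub> y) = nilcox_ideal k +>\<^bsub>FA k\<^esub> (nc_mult x y)"
  using ideal.rcoset_mult_add[OF I_ideal, of x k y] by (simp add: NC_simps)

lemma rep_coset: "x \<in> carrier (FA k) \<Longrightarrow> rep (nilcox_ideal k +>\<^bsub>FA k\<^esub> x) \<in> nilcox_ideal k +>\<^bsub>FA k\<^esub> x"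
proof -
  assume x: "x \<in> carrier (FA k)"
  interpret ideal "nilcox_ideal k" "FA k" by (rule I_ideal)
  have "x \<in> nilcox_ideal k +>\<^bsub>FA k\<^esub> x" using x by (rule a_rcos_self)
  then show ?thesis unfolding rep_def by (rule someI[of "\<lambda>f. f \<in> _"])
qed

lemma coset_eq_rep: "x \<in> carrier (FA k) \<Longrightarrow> y \<in> nilcox_ideal k +>\<^bsub>FA k\<^esub> x \<Longrightarrow>
   nilcox_ideal k +>\<^bsub>FA k\<^esub> y = nilcox_ideal k +>\<^bsub>FA k\<^esub> x"
proof -
  assume x: "x \<in> carrier (FA k)" and y: "y \<in> nilcox_ideal k +>\<^bsub>FA k\<^esub> x"
  interpret ideal "nilcox_ideal k" "FA k" by (rule I_ideal)
  show ?thesis using a_repr_independence'[OF y x] by simp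
qed

lemma coset_sub_car: "x \<in> carrier (FA k) \<Longrightarrow> y \<in> nilcox_ideal k +>\<^bsub>FA k\<^esub> x \<Longrightarrow> y \<in> carrier (FA k)"
proof -
  assume x: "x \<in> carrier (FA k)" and y: "y \<in> nilcox_ideal k +>\<^bsub>FA k\<^esub> x"
  interpret ideal "nilcox_ideal k" "FA k" by (rule I_ideal)
  show ?thesis using a_elemrcos_carrier[OF x y] .
qed

lemma rep_NC: "C \<in> carrier (NC k) \<Longrightarrow> rep C \<in> carrier (FA k) \<and> C = nilcox_ideal k +>\<^bsub>FA k\<^esub> rep C"
proof -
  assume "C \<in> carrier (NC k)"
  then obtain x where x: "x \<in> carrier (FA k)" "C = nilcox_ideal k +>\<^bsub>FA k\<^esub> x" using NC_cosetE by blast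
  have r: "rep C \<in> nilcox_ideal k +>\<^bsub>FA k\<^esub> x" using rep_coset[OF x(1)] x(2) by simp
  show ?thesis using coset_eq_rep[OF x(1) r] coset_sub_car[OF x(1) r] x(2) by simp
qed



lemma kill_car: "f \<in> carrier (FA (Suc n)) \<Longrightarrow> kill_letter n f \<in> carrier (FA n)"
proof -
  assume f: "f \<in> carrier (FA (Suc n))"
  have "{w. kill_letter n f w \<noteq> 0} \<subseteq> {w. f w \<noteq> 0}" by (auto simp: kill_letter_def)
  moreover have "set w \<subseteq> {1..<n}" if "kill_letter n f w \<noteq> 0" for w
  proof -
    have "n \<notin> set w" "f w \<noteq> 0" using that by (auto simp: kill_letter_def split: if_splits)
    moreover have "set w \<subseteq> {1..<Suc n}" using f \<open>f w \<noteq> 0\<close> by (auto simp: FA_car)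
    ultimately show ?thesis by (auto simp: less_Suc_eq)
  qed
  ultimately show ?thesis using f by (auto simp: FA_car intro: finite_subset)
qed

lemma kill_id: "f \<in> carrier (FA n) \<Longrightarrow> kill_letter n f = f"
proof
  fix w assume f: "f \<in> carrier (FA n)"
  show "kill_letter n f w = f w"
  proof (cases "n \<in> set w")
    case True
    have "f w = 0"
    proof (rule ccontr)
      assume "f w \<noteq> 0"
      then have "set w \<subseteq> {1..<n}" using f by (auto simp: FA_car)
      then show False using True by auto
    qed
    then show ?thesis by (simp add: kill_letter_def)
  qed (simp add: kill_letter_def)
qed

lemma kill_mult: "kill_letter n (nc_mult f g) = nc_mult (kill_letter n f) (kill_letter n g)"
proof
  fix w :: "nat list"
  show "kill_letter n (nc_mult f g) w = nc_mult (kill_letter n f) (kill_letter n g) w"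
  proof (cases "n \<in> set w")
    case True
    have "nc_mult (kill_letter n f) (kill_letter n g) w = 0"
      unfolding nc_mult_def
    proof (rule sum.neutral, rule ballI)
      fix k
      have "n \<in> set (take k w) \<or> n \<in> set (drop k w)"
        using True by (metis Un_iff append_take_drop_id set_append)
      then show "kill_letter n f (take k w) * kill_letter n g (drop k w) = 0"
        by (auto simp: kill_letter_def)
    qed
    then show ?thesis using True by (simp add: kill_letter_def)
  next
    case False
    then have "n \<notin> set (take k w)" "n \<notin> set (drop k w)" for k
      by (meson in_set_takeD in_set_dropD)+
    then show ?thesis using False by (simp add: kill_letter_def nc_mult_def)
  qed
qed

lemma kill_add: "kill_letter n (\<lambda>w. f w + g w) = (\<lambda>w. kill_letter n f w + kill_letter n g w)"
  by (auto simp: kill_letter_def)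

lemma kill_one: "kill_letter n nc_one = nc_one"
  by (auto simp: kill_letter_def nc_one_def)

lemma kill_gen: "kill_letter n (nc_gen i) = (if i = n then (\<lambda>w. 0) else nc_gen i)"
  by (auto simp: kill_letter_def nc_gen_def)

lemma kill_diff: "kill_letter n (nc_diff f g) = nc_diff (kill_letter n f) (kill_letter n g)"
  by (auto simp: kill_letter_def nc_diff_def)

lemma nc_mult_0l: "nc_mult (\<lambda>w. 0) g = (\<lambda>w. 0)" by (simp add: nc_mult_def)
lemma nc_mult_0r: "nc_mult f (\<lambda>w. 0) = (\<lambda>w. 0)" by (simp add: nc_mult_def)
lemma nc_diff_00: "nc_diff (\<lambda>w. 0) (\<lambda>w. 0) = (\<lambda>w. 0)" by (simp add: nc_diff_def)

lemma kill_hom: "ring_hom_ring (FA (Suc n)) (FA n) (kill_letter n)"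
  by (rule ring_hom_ringI[OF FA_ring FA_ring]) (auto simp: kill_car kill_mult kill_add kill_one)

lemma kill_rels: "r \<in> nilcox_rels (Suc n) \<Longrightarrow> kill_letter n r = (\<lambda>w. 0) \<or> kill_letter n r \<in> nilcox_rels n"
proof -
  assume "r \<in> nilcox_rels (Suc n)"
  then consider (a) i where "r = nc_mult (nc_gen i) (nc_gen i)" "i \<in> {1..<Suc n}"
    | (b) i j where "r = nc_diff (nc_mult (nc_gen i) (nc_gen j)) (nc_mult (nc_gen j) (nc_gen i))"
        "i \<in> {1..<Suc n}" "j \<in> {1..<Suc n}" "i > j + 1 \<or> j > i + 1"
    | (c) i where "r = nc_diff (nc_mult (nc_mult (nc_gen i) (nc_gen (i+1))) (nc_gen i))
              (nc_mult (nc_mult (nc_gen (i+1)) (nc_gen i)) (nc_gen (i+1)))"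
        "i \<in> {1..<Suc n}" "i + 1 \<in> {1..<Suc n}"
    unfolding nilcox_rels_def by blast
  then show ?thesis
  proof cases
    case a
    show ?thesis
    proof (cases "i = n")
      case True then show ?thesis using a by (simp add: kill_mult kill_gen nc_mult_0l)
    next
      case False
      then have "i \<in> {1..<n}" using a by auto
      then show ?thesis using a False unfolding nilcox_rels_def by (auto simp: kill_mult kill_gen)
    qed
  next
    case b
    show ?thesis
    proof (cases "i = n \<or> j = n")
      case True then show ?thesis using b
        by (auto simp: kill_mult kill_gen kill_diff nc_mult_0l nc_mult_0r nc_diff_00)
    next
      case False
      then have "i \<in> {1..<n}" "j \<in> {1..<n}" using b by auto
      then have "kill_letter n r = nc_diff (nc_mult (nc_gen i) (nc_gen j)) (nc_mult (nc_gen j) (nc_gen i))"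
        using b False by (auto simp: kill_mult kill_gen kill_diff)
      then show ?thesis using b \<open>i \<in> {1..<n}\<close> \<open>j \<in> {1..<n}\<close> unfolding nilcox_rels_def by blast
    qed
  next
    case c
    show ?thesis
    proof (cases "i + 1 = n")
      case True then show ?thesis using c
        by (auto simp: kill_mult kill_gen kill_diff nc_mult_0l nc_mult_0r nc_diff_00)
    next
      case False
      then have i: "i \<in> {1..<n}" "i + 1 \<in> {1..<n}" "i \<noteq> n" using c by auto
      then have "kill_letter n r = nc_diff (nc_mult (nc_mult (nc_gen i) (nc_gen (i+1))) (nc_gen i))
              (nc_mult (nc_mult (nc_gen (i+1)) (nc_gen i)) (nc_gen (i+1)))"
        using c False by (simp add: kill_mult kill_gen kill_diff)
      then show ?thesis using i unfolding nilcox_rels_def by blast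
    qed
  qed
qed

lemma kill_ideal: "f \<in> nilcox_ideal (Suc n) \<Longrightarrow> kill_letter n f \<in> nilcox_ideal n"
proof -
  assume f: "f \<in> nilcox_ideal (Suc n)"
  let ?J = "{r \<in> carrier (FA (Suc n)). kill_letter n r \<in> nilcox_ideal n}"
  have J: "ideal ?J (FA (Suc n))" by (rule ring_hom_ring.ideal_vimage[OF kill_hom I_ideal])
  have "nilcox_rels (Suc n) \<subseteq> ?J"
  proof
    fix r assume r: "r \<in> nilcox_rels (Suc n)"
    have rc: "r \<in> carrier (FA (Suc n))" using r rels_car by blast
    have z: "(\<lambda>w. 0) \<in> nilcox_ideal n"
      using additive_subgroup.zero_closed[OF ideal.axioms(1)[OF I_ideal]] by simp
    have "nilcox_rels n \<subseteq> nilcox_ideal n"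
      unfolding nilcox_ideal_def by (rule ring.genideal_self[OF FA_ring rels_car])
    then show "r \<in> ?J" using kill_rels[OF r] rc z by auto
  qed
  then have "nilcox_ideal (Suc n) \<subseteq> ?J"
    unfolding nilcox_ideal_def[of "Suc n"] by (rule ring.genideal_minimal[OF FA_ring J])
  then show ?thesis using f by blast
qed

lemma tmap_coset: "x \<in> carrier (FA (Suc n)) \<Longrightarrow>
  tmap n (nilcox_ideal (Suc n) +>\<^bsub>FA (Suc n)\<^esub> x) = nilcox_ideal n +>\<^bsub>FA n\<^esub> kill_letter n x"
proof -
  assume x: "x \<in> carrier (FA (Suc n))"
  define r where "r = rep (nilcox_ideal (Suc n) +>\<^bsub>FA (Suc n)\<^esub> x)"
  have r1: "r \<in> nilcox_ideal (Suc n) +>\<^bsub>FA (Suc n)\<^esub> x" unfolding r_def by (rule rep_coset[OF x])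
  have rc: "r \<in> carrier (FA (Suc n))" by (rule coset_sub_car[OF x r1])
  interpret I1: ideal "nilcox_ideal (Suc n)" "FA (Suc n)" by (rule I_ideal)
  interpret I0: ideal "nilcox_ideal n" "FA n" by (rule I_ideal)
  have "r \<ominus>\<^bsub>FA (Suc n)\<^esub> x \<in> nilcox_ideal (Suc n)"
    using I1.a_rcos_module_minus[OF FA_ring x rc] r1 by simp
  then have "(\<lambda>w. r w - x w) \<in> nilcox_ideal (Suc n)" using FA_minus[OF rc x] by simp
  then have "kill_letter n (\<lambda>w. r w - x w) \<in> nilcox_ideal n" by (rule kill_ideal)
  moreover have "kill_letter n (\<lambda>w. r w - x w) = kill_letter n r \<ominus>\<^bsub>FA n\<^esub> kill_letter n x"
    using FA_minus[OF kill_car[OF rc] kill_car[OF x]] by (auto simp: kill_letter_def)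
  ultimately have "kill_letter n r \<in> nilcox_ideal n +>\<^bsub>FA n\<^esub> kill_letter n x"
    using I0.a_rcos_module_minus[OF FA_ring kill_car[OF x] kill_car[OF rc]] by simp
  then have "nilcox_ideal n +>\<^bsub>FA n\<^esub> kill_letter n r = nilcox_ideal n +>\<^bsub>FA n\<^esub> kill_letter n x"
    by (rule coset_eq_rep[OF kill_car[OF x]])
  then show ?thesis by (simp add: tmap_def r_def)
qed

lemma tmap_car: "C \<in> carrier (NC (Suc n)) \<Longrightarrow> tmap n C \<in> carrier (NC n)"
  using rep_NC[of C "Suc n"] tmap_coset[of "rep C" n] by (metis coset_car kill_car)

lemma tmap_add: "C \<in> carrier (NC (Suc n)) \<Longrightarrow> D \<in> carrier (NC (Suc n)) \<Longrightarrow>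
   tmap n (C \<oplus>\<^bsub>NC (Suc n)\<^esub> D) = tmap n C \<oplus>\<^bsub>NC n\<^esub> tmap n D"
proof -
  assume C: "C \<in> carrier (NC (Suc n))" and D: "D \<in> carrier (NC (Suc n))"
  obtain x y where x: "x \<in> carrier (FA (Suc n))" "C = nilcox_ideal (Suc n) +>\<^bsub>FA (Suc n)\<^esub> x"
    and y: "y \<in> carrier (FA (Suc n))" "D = nilcox_ideal (Suc n) +>\<^bsub>FA (Suc n)\<^esub> y"
    using NC_cosetE[OF C] NC_cosetE[OF D] by blast
  have xy: "(\<lambda>w. x w + y w) \<in> carrier (FA (Suc n))"
    using x y abelian_monoid.a_closed[OF abelian_group.axioms(1)[OF FA_abelian]] by fastforce
  show ?thesis using x y xy
    by (simp add: NC_add tmap_coset kill_add kill_car)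
qed

lemma tmap_mult: "C \<in> carrier (NC (Suc n)) \<Longrightarrow> D \<in> carrier (NC (Suc n)) \<Longrightarrow>
   tmap n (C \<otimes>\<^bsub>NC (Suc n)\<^esub> D) = tmap n C \<otimes>\<^bsub>NC n\<^esub> tmap n D"
proof -
  assume C: "C \<in> carrier (NC (Suc n))" and D: "D \<in> carrier (NC (Suc n))"
  obtain x y where x: "x \<in> carrier (FA (Suc n))" "C = nilcox_ideal (Suc n) +>\<^bsub>FA (Suc n)\<^esub> x"
    and y: "y \<in> carrier (FA (Suc n))" "D = nilcox_ideal (Suc n) +>\<^bsub>FA (Suc n)\<^esub> y"
    using NC_cosetE[OF C] NC_cosetE[OF D] by blast
  show ?thesis using x y
    by (simp add: NC_mult tmap_coset kill_mult kill_car nc_mult_car)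
qed

lemma tmap_one: "tmap n \<one>\<^bsub>NC (Suc n)\<^esub> = \<one>\<^bsub>NC n\<^esub>"
proof -
  have "nc_one \<in> carrier (FA (Suc n))" by (auto simp: FA_car nc_one_def)
  then show ?thesis by (simp add: NC_simps tmap_coset kill_one)
qed

lemma tmap_hom: "ring_hom_ring (NC (Suc n)) (NC n) (tmap n)"
  by (rule ring_hom_ringI[OF NC_ring NC_ring]) (auto simp: tmap_car tmap_add tmap_mult tmap_one)

lemma tmap_zero: "tmap n \<zero>\<^bsub>NC (Suc n)\<^esub> = \<zero>\<^bsub>NC n\<^esub>"
  using ring_hom_zero[OF ring_hom_ring.homh[OF tmap_hom] NC_ring NC_ring] .

lemma chi_car: "C \<in> carrier (NC n) \<Longrightarrow> chi n C \<in> carrier (NC (Suc n))"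
  unfolding chi_def using rep_NC[of C n] by (metis coset_car FA_mono)

lemma tmap_chi: "C \<in> carrier (NC n) \<Longrightarrow> tmap n (chi n C) = C"
proof -
  assume C: "C \<in> carrier (NC n)"
  have r: "rep C \<in> carrier (FA n)" "C = nilcox_ideal n +>\<^bsub>FA n\<^esub> rep C" using rep_NC[OF C] by auto
  show ?thesis unfolding chi_def using tmap_coset[OF FA_mono[OF r(1)]] kill_id[OF r(1)] r(2) by simp
qed



lemma part1: "\<exists>\<phi>. bimod_iso (carrier (NC n)) (carrier (NC n))
                 (tensor (carrier (NC (Suc n))) (Dmod n) (Imod n)) (regular (NC n)) \<phi>"
proof -
  interpret A: ring "NC n" by (rule NC_ring)
  interpret B: ring "NC (Suc n)" by (rule NC_ring)
  define f :: "ncel \<times> ncel \<Rightarrow> ncel" where "f = (\<lambda>(d, i). tmap n d \<otimes>\<^bsub>NC n\<^esub> i)"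
  define \<psi> :: "ncel \<Rightarrow> ncel \<times> ncel" where "\<psi> = (\<lambda>a. (\<one>\<^bsub>NC (Suc n)\<^esub>, a))"
  have simple: "(\<lambda>z. delta (m, x) z - delta (\<psi> (f (m, x))) z) \<in> tker (carrier (NC (Suc n))) (Dmod n) (Imod n)"
    if m: "m \<in> carrier (NC (Suc n))" and x: "x \<in> carrier (NC n)" for m x
  proof -
    have "(\<lambda>z. delta (m, x) z - delta (\<one>\<^bsub>NC (Suc n)\<^esub>, tmap n m \<otimes>\<^bsub>NC n\<^esub> x) z)
       \<in> trels (carrier (NC (Suc n))) (Dmod n) (Imod n)"
      unfolding trels_def
      by (rule UnI2, rule CollectI, rule exI[of _ "\<one>\<^bsub>NC (Suc n)\<^esub>"], rule exI[of _ m], rule exI[of _ x])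
         (simp add: Dmod_def Imod_def m x)
    then show ?thesis by (auto simp: f_def \<psi>_def intro: tker_gen)
  qed
  have add: "(\<lambda>z. delta (\<psi> (t \<oplus>\<^bsub>NC n\<^esub> t')) z - delta (\<psi> t) z - delta (\<psi> t') z) \<in> tker (carrier (NC (Suc n))) (Dmod n) (Imod n)"
    if t: "t \<in> carrier (NC n)" and t': "t' \<in> carrier (NC n)" for t t'
  proof -
    have "(\<lambda>z. delta (\<one>\<^bsub>NC (Suc n)\<^esub>, t \<oplus>\<^bsub>NC n\<^esub> t') z - delta (\<one>\<^bsub>NC (Suc n)\<^esub>, t) z - delta (\<one>\<^bsub>NC (Suc n)\<^esub>, t') z)
       \<in> trels (carrier (NC (Suc n))) (Dmod n) (Imod n)"
      unfolding trels_def
      by (rule UnI1, rule UnI2, rule CollectI, rule exI[of _ "\<one>\<^bsub>NC (Suc n)\<^esub>"], rule exI[of _ t], rule exI[of _ t'])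
         (simp add: Dmod_def Imod_def t t')
    then show ?thesis by (auto simp: \<psi>_def intro: tker_gen)
  qed
  interpret tens "NC n" "carrier (NC n)" "carrier (NC (Suc n))" "carrier (NC n)" "Dmod n" "Imod n" "regular (NC n)" f \<psi>
  proof (unfold_locales, goal_cases)
    case (21 m x) then show ?case using simple by (simp add: Dmod_def Imod_def)
  next
    case (22 t t') then show ?case using add by (simp add: Dmod_def Imod_def)
  qed (auto simp: Dmod_def Imod_def regular_def f_def \<psi>_def tmap_car chi_car tmap_mult tmap_add
        tmap_chi tmap_one A.l_distr A.r_distr B.l_distr A.m_assoc B.m_assoc)
  show ?thesis by (rule iso)
qed



definition G2 :: "(nat \<Rightarrow> ncel) ring" where
  "G2 = \<lparr>carrier = Asum_car, mult = (\<lambda>a b n. a n \<otimes>\<^bsub>NC n\<^esub> b n), one = (\<lambda>n. \<one>\<^bsub>NC n\<^esub>),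
         zero = (\<lambda>n. \<zero>\<^bsub>NC n\<^esub>), add = (\<lambda>a b n. a n \<oplus>\<^bsub>NC n\<^esub> b n)\<rparr>"

definition ee :: "(nat \<Rightarrow> ncel) \<Rightarrow> nat \<Rightarrow> ncel" where
  "ee a = (\<lambda>n. if a n = \<zero>\<^bsub>NC n\<^esub> then \<zero>\<^bsub>NC (Suc n)\<^esub> else \<one>\<^bsub>NC (Suc n)\<^esub>)"

definition fD :: "(nat \<Rightarrow> ncel) \<times> (nat \<Rightarrow> ncel) \<Rightarrow> nat \<Rightarrow> ncel" where
  "fD = (\<lambda>(d, i) n. tmap n (d n) \<otimes>\<^bsub>NC n\<^esub> i n)"

definition shift :: "(nat \<Rightarrow> ncel) \<Rightarrow> nat \<Rightarrow> ncel" where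
  "shift d n = (case n of 0 \<Rightarrow> \<zero>\<^bsub>NC 0\<^esub> | Suc m \<Rightarrow> d m)"

lemma Dsum_car: "d \<in> bcar Dsum \<longleftrightarrow> (\<forall>n. d n \<in> carrier (NC (Suc n))) \<and> finite {n. d n \<noteq> \<zero>\<^bsub>NC (Suc n)\<^esub>}"
  by (simp add: Dsum_def Dmod_def)

lemma Isum_car: "bcar Isum = Asum_car"
  by (simp add: Isum_def Imod_def Asum_car_def)

lemma Asum_iff: "a \<in> Asum_car \<longleftrightarrow> (\<forall>n. a n \<in> carrier (NC n)) \<and> finite {n. a n \<noteq> \<zero>\<^bsub>NC n\<^esub>}"
  by (simp add: Asum_car_def)

lemma fin_sub: "finite {n. P n} \<Longrightarrow> (\<And>n. Q n \<Longrightarrow> P n) \<Longrightarrow> finite {n. Q n}"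
  by (metis (mono_tags, lifting) finite_subset mem_Collect_eq subsetI)

lemma fin_sub2: "finite {n. P n} \<Longrightarrow> finite {n. P' n} \<Longrightarrow> (\<And>n. Q n \<Longrightarrow> P n \<or> P' n) \<Longrightarrow> finite {n. Q n}"
  by (rule fin_sub[of "\<lambda>n. P n \<or> P' n"]) (auto simp: Collect_disj_eq)

lemmas R = ring.ring_simprules[OF NC_ring]

context fixes n :: nat begin
interpretation ring "NC n" by (rule NC_ring)
lemma NC_lnull: "x \<in> carrier (NC n) \<Longrightarrow> \<zero>\<^bsub>NC n\<^esub> \<otimes>\<^bsub>NC n\<^esub> x = \<zero>\<^bsub>NC n\<^esub>" by simp
lemma NC_rnull: "x \<in> carrier (NC n) \<Longrightarrow> x \<otimes>\<^bsub>NC n\<^esub> \<zero>\<^bsub>NC n\<^esub> = \<zero>\<^bsub>NC n\<^esub>" by simp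
lemma NC_acomm: "x \<in> carrier (NC n) \<Longrightarrow> y \<in> carrier (NC n) \<Longrightarrow> x \<oplus>\<^bsub>NC n\<^esub> y = y \<oplus>\<^bsub>NC n\<^esub> x" by (rule a_comm)
lemma NC_lneg: "x \<in> carrier (NC n) \<Longrightarrow> \<ominus>\<^bsub>NC n\<^esub> x \<oplus>\<^bsub>NC n\<^esub> x = \<zero>\<^bsub>NC n\<^esub>" by (rule l_neg)
lemma NC_neg_car: "x \<in> carrier (NC n) \<Longrightarrow> \<ominus>\<^bsub>NC n\<^esub> x \<in> carrier (NC n)" by simp
lemma NC_neg_zero: "x \<in> carrier (NC n) \<Longrightarrow> \<ominus>\<^bsub>NC n\<^esub> x = \<zero>\<^bsub>NC n\<^esub> \<Longrightarrow> x = \<zero>\<^bsub>NC n\<^esub>"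
  by (metis minus_minus minus_zero)
lemma NC_lone: "x \<in> carrier (NC n) \<Longrightarrow> \<one>\<^bsub>NC n\<^esub> \<otimes>\<^bsub>NC n\<^esub> x = x" by simp
lemma NC_rone: "x \<in> carrier (NC n) \<Longrightarrow> x \<otimes>\<^bsub>NC n\<^esub> \<one>\<^bsub>NC n\<^esub> = x" by simp
lemma NC_one_car: "\<one>\<^bsub>NC n\<^esub> \<in> carrier (NC n)" by simp
lemma NC_zero_car: "\<zero>\<^bsub>NC n\<^esub> \<in> carrier (NC n)" by simp
lemma NC_mcar: "x \<in> carrier (NC n) \<Longrightarrow> y \<in> carrier (NC n) \<Longrightarrow> x \<otimes>\<^bsub>NC n\<^esub> y \<in> carrier (NC n)" by simp
lemma NC_acar: "x \<in> carrier (NC n) \<Longrightarrow> y \<in> carrier (NC n) \<Longrightarrow> x \<oplus>\<^bsub>NC n\<^esub> y \<in> carrier (NC n)" by simp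
lemma NC_assoc: "x \<in> carrier (NC n) \<Longrightarrow> y \<in> carrier (NC n) \<Longrightarrow> z \<in> carrier (NC n) \<Longrightarrow>
   x \<otimes>\<^bsub>NC n\<^esub> y \<otimes>\<^bsub>NC n\<^esub> z = x \<otimes>\<^bsub>NC n\<^esub> (y \<otimes>\<^bsub>NC n\<^esub> z)" by (rule m_assoc)
lemma NC_ldistr: "x \<in> carrier (NC n) \<Longrightarrow> y \<in> carrier (NC n) \<Longrightarrow> z \<in> carrier (NC n) \<Longrightarrow>
   (x \<oplus>\<^bsub>NC n\<^esub> y) \<otimes>\<^bsub>NC n\<^esub> z = x \<otimes>\<^bsub>NC n\<^esub> z \<oplus>\<^bsub>NC n\<^esub> y \<otimes>\<^bsub>NC n\<^esub> z" by (rule l_distr)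
lemma NC_rdistr: "x \<in> carrier (NC n) \<Longrightarrow> y \<in> carrier (NC n) \<Longrightarrow> z \<in> carrier (NC n) \<Longrightarrow>
   z \<otimes>\<^bsub>NC n\<^esub> (x \<oplus>\<^bsub>NC n\<^esub> y) = z \<otimes>\<^bsub>NC n\<^esub> x \<oplus>\<^bsub>NC n\<^esub> z \<otimes>\<^bsub>NC n\<^esub> y" by (rule r_distr)
lemma NC_azero: "x \<in> carrier (NC n) \<Longrightarrow> y \<in> carrier (NC n) \<Longrightarrow> x = \<zero>\<^bsub>NC n\<^esub> \<Longrightarrow> y = \<zero>\<^bsub>NC n\<^esub> \<Longrightarrow> x \<oplus>\<^bsub>NC n\<^esub> y = \<zero>\<^bsub>NC n\<^esub>" by simp
lemma NC_minus_zero: "\<ominus>\<^bsub>NC n\<^esub> \<zero>\<^bsub>NC n\<^esub> = \<zero>\<^bsub>NC n\<^esub>" by simp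
end

lemma G2_abelian: "abelian_group G2"
proof (rule abelian_groupI)
  fix x y assume "x \<in> carrier G2" "y \<in> carrier G2"
  then show "x \<oplus>\<^bsub>G2\<^esub> y \<in> carrier G2"
    by (auto simp: G2_def Asum_iff R intro!: fin_sub2[of "\<lambda>n. x n \<noteq> \<zero>\<^bsub>NC n\<^esub>" "\<lambda>n. y n \<noteq> \<zero>\<^bsub>NC n\<^esub>"])
next
  show "\<zero>\<^bsub>G2\<^esub> \<in> carrier G2" by (auto simp: G2_def Asum_iff R)
next
  fix x y z assume "x \<in> carrier G2" "y \<in> carrier G2" "z \<in> carrier G2"
  then show "x \<oplus>\<^bsub>G2\<^esub> y \<oplus>\<^bsub>G2\<^esub> z = x \<oplus>\<^bsub>G2\<^esub> (y \<oplus>\<^bsub>G2\<^esub> z)"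
    by (auto simp: G2_def Asum_iff R)
next
  fix x y assume "x \<in> carrier G2" "y \<in> carrier G2"
  then show "x \<oplus>\<^bsub>G2\<^esub> y = y \<oplus>\<^bsub>G2\<^esub> x"
    by (auto simp: G2_def Asum_iff NC_acomm)
next
  fix x assume "x \<in> carrier G2"
  then show "\<zero>\<^bsub>G2\<^esub> \<oplus>\<^bsub>G2\<^esub> x = x"
    by (auto simp: G2_def Asum_iff R)
next
  fix x assume x: "x \<in> carrier G2"
  show "\<exists>y\<in>carrier G2. y \<oplus>\<^bsub>G2\<^esub> x = \<zero>\<^bsub>G2\<^esub>"
  proof (rule bexI[of _ "\<lambda>n. \<ominus>\<^bsub>NC n\<^esub> x n"])
    show "(\<lambda>n. \<ominus>\<^bsub>NC n\<^esub> x n) \<oplus>\<^bsub>G2\<^esub> x = \<zero>\<^bsub>G2\<^esub>" using x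
      by (auto simp: G2_def Asum_iff NC_lneg)
    show "(\<lambda>n. \<ominus>\<^bsub>NC n\<^esub> x n) \<in> carrier G2" using x
      by (auto simp: G2_def Asum_iff NC_neg_car NC_minus_zero intro!: fin_sub[of "\<lambda>n. x n \<noteq> \<zero>\<^bsub>NC n\<^esub>"] dest: NC_neg_zero)
  qed
qed


lemma tker_negg: "g \<in> tker R M N \<Longrightarrow> (\<lambda>z. - g z) \<in> tker R M N"
  using tker_diff[OF tker_zero, of g] by simp

lemma tker_addg: "g \<in> tker R M N \<Longrightarrow> h \<in> tker R M N \<Longrightarrow> (\<lambda>z. g z + h z) \<in> tker R M N"
  using tker_diff[OF _ tker_negg[of h], of g] by simp

lemma tker_cong: "g \<in> tker R M N \<Longrightarrow> (\<And>z. g z = h z) \<Longrightarrow> h \<in> tker R M N"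
  by (metis ext)

lemma ind_car: "finite {n. P n} \<Longrightarrow> (\<lambda>n. if P n then \<one>\<^bsub>NC (Suc n)\<^esub> else \<zero>\<^bsub>NC (Suc n)\<^esub>) \<in> bcar Dsum"
  unfolding Dsum_car
proof (intro conjI allI)
  fix n show "(if P n then \<one>\<^bsub>NC (Suc n)\<^esub> else \<zero>\<^bsub>NC (Suc n)\<^esub>) \<in> carrier (NC (Suc n))"
    by (simp add: NC_one_car NC_zero_car)
next
  assume f: "finite {n. P n}"
  show "finite {n. (if P n then \<one>\<^bsub>NC (Suc n)\<^esub> else \<zero>\<^bsub>NC (Suc n)\<^esub>) \<noteq> \<zero>\<^bsub>NC (Suc n)\<^esub>}"
    by (rule fin_sub[OF f]) (simp split: if_splits)
qed

lemma ee_alt: "ee a = (\<lambda>n. if a n \<noteq> \<zero>\<^bsub>NC n\<^esub> then \<one>\<^bsub>NC (Suc n)\<^esub> else \<zero>\<^bsub>NC (Suc n)\<^esub>)"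
  by (simp add: ee_def fun_eq_iff)

lemma ee_car: "a \<in> Asum_car \<Longrightarrow> ee a \<in> bcar Dsum"
  unfolding ee_alt by (rule ind_car) (simp add: Asum_iff)

lemma ee_f: "a \<in> Asum_car \<Longrightarrow> (\<lambda>n. tmap n (ee a n) \<otimes>\<^bsub>NC n\<^esub> a n) = a"
proof
  fix n assume a: "a \<in> Asum_car"
  then have an: "a n \<in> carrier (NC n)" by (simp add: Asum_iff)
  show "tmap n (ee a n) \<otimes>\<^bsub>NC n\<^esub> a n = a n"
    using an by (cases "a n = \<zero>\<^bsub>NC n\<^esub>") (simp_all add: ee_def tmap_zero tmap_one NC_lone NC_lnull)
qed

lemma shift_car: "(\<And>m. d m \<in> carrier (NC (Suc m))) \<Longrightarrow> finite {m. d m \<noteq> \<zero>\<^bsub>NC (Suc m)\<^esub>} \<Longrightarrow> shift d \<in> Asum_car"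
proof -
  assume c: "\<And>m. d m \<in> carrier (NC (Suc m))" and f: "finite {m. d m \<noteq> \<zero>\<^bsub>NC (Suc m)\<^esub>}"
  have "{n. shift d n \<noteq> \<zero>\<^bsub>NC n\<^esub>} \<subseteq> Suc ` {m. d m \<noteq> \<zero>\<^bsub>NC (Suc m)\<^esub>}"
  proof
    fix n assume "n \<in> {n. shift d n \<noteq> \<zero>\<^bsub>NC n\<^esub>}"
    then show "n \<in> Suc ` {m. d m \<noteq> \<zero>\<^bsub>NC (Suc m)\<^esub>}" by (cases n) (simp_all add: shift_def)
  qed
  moreover have "shift d n \<in> carrier (NC n)" for n using c by (cases n) (simp_all add: shift_def NC_zero_car)
  moreover have "finite (Suc ` {m. d m \<noteq> \<zero>\<^bsub>NC (Suc m)\<^esub>})" using f by simp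
  ultimately show ?thesis unfolding Asum_iff by (blast intro: finite_subset)
qed

lemma Kl:
  assumes u: "u \<in> bcar Dsum" and a: "a \<in> Asum_car" and ua: "\<And>n. a n \<noteq> \<zero>\<^bsub>NC n\<^esub> \<Longrightarrow> u n = \<one>\<^bsub>NC (Suc n)\<^esub>"
  shows "(\<lambda>z. delta (u, a) z - delta (ee a, a) z) \<in> tker Asum_car Dsum Isum"
proof -
  define c where "c = shift (ee a)"
  have ec: "ee a \<in> bcar Dsum" by (rule ee_car[OF a])
  have c: "c \<in> Asum_car" unfolding c_def using ec by (intro shift_car) (auto simp: Dsum_car)
  have u': "u n \<in> carrier (NC (Suc n))" for n using u by (simp add: Dsum_car)
  have r: "ract Dsum u c = ee a"
  proof
    fix n show "ract Dsum u c n = ee a n"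
      using ua[of n] u'[of n] by (cases "a n = \<zero>\<^bsub>NC n\<^esub>") (simp_all add: Dsum_def Dmod_def c_def shift_def ee_def NC_rnull NC_one_car NC_lone)
  qed
  have l: "lact Isum c a = a"
    using ee_f[OF a] by (simp add: Isum_def Imod_def c_def shift_def)
  have "(\<lambda>z. delta (ract Dsum u c, a) z - delta (u, lact Isum c a) z) \<in> trels Asum_car Dsum Isum"
    unfolding trels_def
    by (rule UnI2, rule CollectI, rule exI[of _ u], rule exI[of _ c], rule exI[of _ a])
       (simp add: u c a Isum_car)
  then have "(\<lambda>z. delta (ee a, a) z - delta (u, a) z) \<in> tker Asum_car Dsum Isum"
    using r l by (simp add: tker_gen)
  from tker_negg[OF this] show ?thesis by (rule tker_cong) simp
qed

lemma fD_car: "d \<in> bcar Dsum \<Longrightarrow> i \<in> Asum_car \<Longrightarrow> fD (d, i) \<in> Asum_car"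
proof -
  assume d: "d \<in> bcar Dsum" and i: "i \<in> Asum_car"
  have dn: "d n \<in> carrier (NC (Suc n))" and i_n: "i n \<in> carrier (NC n)" for n
    using d i by (simp_all add: Dsum_car Asum_iff)
  have "finite {n. i n \<noteq> \<zero>\<^bsub>NC n\<^esub>}" using i by (simp add: Asum_iff)
  then have "finite {n. fD (d, i) n \<noteq> \<zero>\<^bsub>NC n\<^esub>}"
    by (rule fin_sub) (use dn i_n in \<open>auto simp: fD_def NC_rnull tmap_car\<close>)
  then show ?thesis unfolding Asum_iff using dn i_n by (simp add: fD_def NC_mcar tmap_car)
qed

lemma psi_simple2:
  assumes d: "d \<in> bcar Dsum" and i: "i \<in> Asum_car"
  shows "(\<lambda>z. delta (d, i) z - delta (ee (fD (d, i)), fD (d, i)) z) \<in> tker Asum_car Dsum Isum"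
proof -
  define u where "u = (\<lambda>n. if d n \<noteq> \<zero>\<^bsub>NC (Suc n)\<^esub> then \<one>\<^bsub>NC (Suc n)\<^esub> else \<zero>\<^bsub>NC (Suc n)\<^esub>)"
  have dn: "d n \<in> carrier (NC (Suc n))" for n using d by (simp add: Dsum_car)
  have uc: "u \<in> bcar Dsum" unfolding u_def by (rule ind_car) (use d in \<open>simp add: Dsum_car\<close>)
  define r where "r = shift d"
  have rc: "r \<in> Asum_car" unfolding r_def using d by (intro shift_car) (auto simp: Dsum_car)
  have e1: "ract Dsum u r = d"
  proof
    fix n show "ract Dsum u r n = d n"
      using dn[of n] by (cases "d n = \<zero>\<^bsub>NC (Suc n)\<^esub>") (simp_all add: Dsum_def Dmod_def r_def shift_def u_def NC_lnull NC_lone)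
  qed
  have e2: "lact Isum r i = fD (d, i)"
    by (simp add: Isum_def Imod_def r_def shift_def fD_def)
  have "(\<lambda>z. delta (ract Dsum u r, i) z - delta (u, lact Isum r i) z) \<in> trels Asum_car Dsum Isum"
    unfolding trels_def
    by (rule UnI2, rule CollectI, rule exI[of _ u], rule exI[of _ r], rule exI[of _ i])
       (simp add: uc rc i Isum_car)
  then have t1: "(\<lambda>z. delta (d, i) z - delta (u, fD (d, i)) z) \<in> tker Asum_car Dsum Isum"
    using e1 e2 by (simp add: tker_gen)
  have t2: "(\<lambda>z. delta (u, fD (d, i)) z - delta (ee (fD (d, i)), fD (d, i)) z) \<in> tker Asum_car Dsum Isum"
  proof (rule Kl[OF uc fD_car[OF d i]])
    fix n assume "fD (d, i) n \<noteq> \<zero>\<^bsub>NC n\<^esub>"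
    moreover have "fD (d, i) n = \<zero>\<^bsub>NC n\<^esub>" if "d n = \<zero>\<^bsub>NC (Suc n)\<^esub>"
      using i that by (simp add: fD_def tmap_zero NC_lnull Asum_iff)
    ultimately have "d n \<noteq> \<zero>\<^bsub>NC (Suc n)\<^esub>" by blast
    then show "u n = \<one>\<^bsub>NC (Suc n)\<^esub>" by (simp add: u_def)
  qed
  from tker_addg[OF t1 t2] show ?thesis by (rule tker_cong) simp
qed

lemma psi_add2:
  assumes s: "s \<in> Asum_car" and t: "t \<in> Asum_car"
  shows "(\<lambda>z. delta (ee (s \<oplus>\<^bsub>G2\<^esub> t), s \<oplus>\<^bsub>G2\<^esub> t) z - delta (ee s, s) z - delta (ee t, t) z) \<in> tker Asum_car Dsum Isum"
proof -
  interpret abelian_group G2 by (rule G2_abelian)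
  have st: "s \<oplus>\<^bsub>G2\<^esub> t \<in> Asum_car" using s t a_closed by (simp add: G2_def)
  define u where "u = (\<lambda>n. if s n \<noteq> \<zero>\<^bsub>NC n\<^esub> \<or> t n \<noteq> \<zero>\<^bsub>NC n\<^esub> then \<one>\<^bsub>NC (Suc n)\<^esub> else \<zero>\<^bsub>NC (Suc n)\<^esub>)"
  have uc: "u \<in> bcar Dsum" unfolding u_def
    by (rule ind_car, rule fin_sub2[of "\<lambda>n. s n \<noteq> \<zero>\<^bsub>NC n\<^esub>" "\<lambda>n. t n \<noteq> \<zero>\<^bsub>NC n\<^esub>"])
       (use s t in \<open>simp_all add: Asum_iff\<close>)
  have k1: "(\<lambda>z. delta (u, s \<oplus>\<^bsub>G2\<^esub> t) z - delta (ee (s \<oplus>\<^bsub>G2\<^esub> t), s \<oplus>\<^bsub>G2\<^esub> t) z) \<in> tker Asum_car Dsum Isum"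
  proof (rule Kl[OF uc st])
    fix n assume "(s \<oplus>\<^bsub>G2\<^esub> t) n \<noteq> \<zero>\<^bsub>NC n\<^esub>"
    moreover have "(s \<oplus>\<^bsub>G2\<^esub> t) n = \<zero>\<^bsub>NC n\<^esub>" if "s n = \<zero>\<^bsub>NC n\<^esub>" "t n = \<zero>\<^bsub>NC n\<^esub>"
      using that by (simp add: G2_def NC_azero NC_zero_car)
    ultimately have "s n \<noteq> \<zero>\<^bsub>NC n\<^esub> \<or> t n \<noteq> \<zero>\<^bsub>NC n\<^esub>" by blast
    then show "u n = \<one>\<^bsub>NC (Suc n)\<^esub>" by (simp add: u_def)
  qed
  have k2: "(\<lambda>z. delta (u, s) z - delta (ee s, s) z) \<in> tker Asum_car Dsum Isum"
    by (rule Kl[OF uc s]) (simp add: u_def del: de_Morgan_conj)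
  have k3: "(\<lambda>z. delta (u, t) z - delta (ee t, t) z) \<in> tker Asum_car Dsum Isum"
    by (rule Kl[OF uc t]) (simp add: u_def del: de_Morgan_conj)
  have "(\<lambda>z. delta (u, badd Isum s t) z - delta (u, s) z - delta (u, t) z) \<in> trels Asum_car Dsum Isum"
    unfolding trels_def
    by (rule UnI1, rule UnI2, rule CollectI, rule exI[of _ u], rule exI[of _ s], rule exI[of _ t])
       (simp add: uc s t Isum_car)
  moreover have "badd Isum s t = s \<oplus>\<^bsub>G2\<^esub> t" by (simp add: Isum_def Imod_def G2_def)
  ultimately have k4: "(\<lambda>z. delta (u, s \<oplus>\<^bsub>G2\<^esub> t) z - delta (u, s) z - delta (u, t) z) \<in> tker Asum_car Dsum Isum"
    by (simp add: tker_gen)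
  have "(\<lambda>z. (k4f z + k2f z + k3f z) - k1f z) \<in> tker Asum_car Dsum Isum"
    if "k1f \<in> tker Asum_car Dsum Isum" "k2f \<in> tker Asum_car Dsum Isum" "k3f \<in> tker Asum_car Dsum Isum" "k4f \<in> tker Asum_car Dsum Isum"
    for k1f k2f k3f k4f
    using that by (intro tker_diff tker_addg)
  from this[OF k1 k2 k3 k4] show ?thesis by (rule tker_cong) simp
qed


lemma fin_add: "(\<And>n. x n \<in> carrier (NC (k n))) \<Longrightarrow> (\<And>n. y n \<in> carrier (NC (k n))) \<Longrightarrow>
   finite {n. x n \<noteq> \<zero>\<^bsub>NC (k n)\<^esub>} \<Longrightarrow> finite {n. y n \<noteq> \<zero>\<^bsub>NC (k n)\<^esub>} \<Longrightarrow>
   finite {n. x n \<oplus>\<^bsub>NC (k n)\<^esub> y n \<noteq> \<zero>\<^bsub>NC (k n)\<^esub>}"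
proof -
  assume x: "\<And>n. x n \<in> carrier (NC (k n))" and y: "\<And>n. y n \<in> carrier (NC (k n))"
    and fx: "finite {n. x n \<noteq> \<zero>\<^bsub>NC (k n)\<^esub>}" and fy: "finite {n. y n \<noteq> \<zero>\<^bsub>NC (k n)\<^esub>}"
  show ?thesis
  proof (rule fin_sub2[OF fx fy])
    fix n assume "x n \<oplus>\<^bsub>NC (k n)\<^esub> y n \<noteq> \<zero>\<^bsub>NC (k n)\<^esub>"
    then show "x n \<noteq> \<zero>\<^bsub>NC (k n)\<^esub> \<or> y n \<noteq> \<zero>\<^bsub>NC (k n)\<^esub>" using NC_azero[OF x y] by blast
  qed
qed

lemma fin_ml: "(\<And>n. x n \<in> carrier (NC (k n))) \<Longrightarrow> (\<And>n. y n \<in> carrier (NC (k n))) \<Longrightarrow>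
   finite {n. y n \<noteq> \<zero>\<^bsub>NC (k n)\<^esub>} \<Longrightarrow> finite {n. x n \<otimes>\<^bsub>NC (k n)\<^esub> y n \<noteq> \<zero>\<^bsub>NC (k n)\<^esub>}"
proof -
  assume x: "\<And>n. x n \<in> carrier (NC (k n))" and fy: "finite {n. y n \<noteq> \<zero>\<^bsub>NC (k n)\<^esub>}"
  show ?thesis
  proof (rule fin_sub[OF fy])
    fix n assume "x n \<otimes>\<^bsub>NC (k n)\<^esub> y n \<noteq> \<zero>\<^bsub>NC (k n)\<^esub>"
    then show "y n \<noteq> \<zero>\<^bsub>NC (k n)\<^esub>" using NC_rnull[OF x] by metis
  qed
qed

lemma fin_mr: "(\<And>n. x n \<in> carrier (NC (k n))) \<Longrightarrow> (\<And>n. y n \<in> carrier (NC (k n))) \<Longrightarrow>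
   finite {n. x n \<noteq> \<zero>\<^bsub>NC (k n)\<^esub>} \<Longrightarrow> finite {n. x n \<otimes>\<^bsub>NC (k n)\<^esub> y n \<noteq> \<zero>\<^bsub>NC (k n)\<^esub>}"
proof -
  assume y: "\<And>n. y n \<in> carrier (NC (k n))" and fx: "finite {n. x n \<noteq> \<zero>\<^bsub>NC (k n)\<^esub>}"
  show ?thesis
  proof (rule fin_sub[OF fx])
    fix n assume "x n \<otimes>\<^bsub>NC (k n)\<^esub> y n \<noteq> \<zero>\<^bsub>NC (k n)\<^esub>"
    then show "x n \<noteq> \<zero>\<^bsub>NC (k n)\<^esub>" using NC_lnull[OF y] by metis
  qed
qed

lemma Dsum_ops: "badd Dsum d e = (\<lambda>n. d n \<oplus>\<^bsub>NC (Suc n)\<^esub> e n)"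
  "ract Dsum d r = (\<lambda>n. d n \<otimes>\<^bsub>NC (Suc n)\<^esub> r (Suc n))"
  "lact Dsum p d = (\<lambda>n. chi n (p n) \<otimes>\<^bsub>NC (Suc n)\<^esub> d n)"
  by (simp_all add: Dsum_def Dmod_def)

lemma Isum_ops: "badd Isum x y = (\<lambda>n. x n \<oplus>\<^bsub>NC n\<^esub> y n)"
  "ract Isum x s = (\<lambda>n. x n \<otimes>\<^bsub>NC n\<^esub> s n)"
  "lact Isum r x = (\<lambda>n. tmap n (r (Suc n)) \<otimes>\<^bsub>NC n\<^esub> x n)"
  by (simp_all add: Isum_def Imod_def)

lemma Areg_ops: "badd Areg x y = (\<lambda>n. x n \<oplus>\<^bsub>NC n\<^esub> y n)"
  "ract Areg x s = (\<lambda>n. x n \<otimes>\<^bsub>NC n\<^esub> s n)"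
  "lact Areg r x = (\<lambda>n. r n \<otimes>\<^bsub>NC n\<^esub> x n)" "bcar Areg = Asum_car"
  by (simp_all add: Areg_def)

lemma DcarD: "d \<in> bcar Dsum \<Longrightarrow> d n \<in> carrier (NC (Suc n))" by (simp add: Dsum_car)
lemma AcarD: "a \<in> Asum_car \<Longrightarrow> a n \<in> carrier (NC n)" by (simp add: Asum_iff)
lemma DfinD: "d \<in> bcar Dsum \<Longrightarrow> finite {n. d n \<noteq> \<zero>\<^bsub>NC (Suc n)\<^esub>}" by (simp add: Dsum_car)
lemma AfinD: "a \<in> Asum_car \<Longrightarrow> finite {n. a n \<noteq> \<zero>\<^bsub>NC n\<^esub>}" by (simp add: Asum_iff)

lemma G2_car: "carrier G2 = Asum_car" by (simp add: G2_def)

lemma Dsum_closeI: "(\<And>n. d n \<in> carrier (NC (Suc n))) \<Longrightarrow> finite {n. d n \<noteq> \<zero>\<^bsub>NC (Suc n)\<^esub>} \<Longrightarrow> d \<in> bcar Dsum"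
  by (simp add: Dsum_car)
lemma Asum_closeI: "(\<And>n. a n \<in> carrier (NC n)) \<Longrightarrow> finite {n. a n \<noteq> \<zero>\<^bsub>NC n\<^esub>} \<Longrightarrow> a \<in> Asum_car"
  by (simp add: Asum_iff)

lemma part2: "\<exists>\<psi>. bimod_iso Asum_car Asum_car (tensor Asum_car Dsum Isum) Areg \<psi>"
proof -
  interpret tens G2 Asum_car Asum_car Asum_car Dsum Isum Areg fD "\<lambda>a. (ee a, a)"
  proof (rule tens.intro[OF G2_abelian], rule tens_axioms.intro, goal_cases)
    case 1 show ?case by (simp add: Areg_def G2_def)
  next
    case 2 show ?case by (simp add: Areg_def G2_def)
  next
    case (3 m m')
    have c: "\<And>n. m n \<in> carrier (NC (Suc n))" "\<And>n. m' n \<in> carrier (NC (Suc n))"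
      using 3 by (simp_all add: Dsum_car)
    have f: "finite {n. m n \<noteq> \<zero>\<^bsub>NC (Suc n)\<^esub>}" "finite {n. m' n \<noteq> \<zero>\<^bsub>NC (Suc n)\<^esub>}"
      using 3 by (simp_all add: Dsum_car)
    show ?case by (simp add: Dsum_ops Dsum_car NC_acar c fin_add[of _ Suc, OF c f])
  next
    case (4 x x')
    have xa: "x \<in> Asum_car" "x' \<in> Asum_car" using 4 by (simp_all add: Isum_car)
    show ?case unfolding Isum_ops Isum_car
      by (intro Asum_closeI NC_acar fin_add[of x "\<lambda>n. n" x'] AcarD[OF xa(1)] AcarD[OF xa(2)] AfinD[OF xa(1)] AfinD[OF xa(2)])
  next
    case (5 m r)
    have m: "m \<in> bcar Dsum" and r: "r \<in> Asum_car" using 5 by auto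
    show ?case unfolding Dsum_ops
      by (intro Dsum_closeI NC_mcar fin_mr[of m Suc "\<lambda>n. r (Suc n)"] DcarD[OF m] AcarD[OF r] DfinD[OF m])
  next
    case (6 r x)
    have r: "r \<in> Asum_car" and x: "x \<in> Asum_car" using 6 by (auto simp: Isum_car)
    show ?case unfolding Isum_ops Isum_car
      by (intro Asum_closeI NC_mcar fin_ml[of "\<lambda>n. tmap n (r (Suc n))" "\<lambda>n. n" x] tmap_car AcarD[OF r] AcarD[OF x] AfinD[OF x])
  next
    case (7 p m)
    have p: "p \<in> Asum_car" and m: "m \<in> bcar Dsum" using 7 by auto
    show ?case unfolding Dsum_ops
      by (intro Dsum_closeI NC_mcar fin_ml[of "\<lambda>n. chi n (p n)" Suc m] chi_car DcarD[OF m] AcarD[OF p] DfinD[OF m])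
  next
    case (8 x s)
    have x: "x \<in> Asum_car" and s: "s \<in> Asum_car" using 8 by (auto simp: Isum_car)
    show ?case unfolding Isum_ops Isum_car
      by (intro Asum_closeI NC_mcar fin_mr[of x "\<lambda>n. n" s] AcarD[OF s] AcarD[OF x] AfinD[OF x])
  next
    case (9 m x) then show ?case using fD_car by (simp add: G2_def Isum_car)
  next
    case (10 m m' x) then show ?case
      by (simp add: fun_eq_iff Dsum_ops fD_def G2_def tmap_add NC_ldistr DcarD AcarD Isum_car tmap_car)
  next
    case (11 m x x') then show ?case
      by (simp add: fun_eq_iff Isum_ops fD_def G2_def NC_rdistr DcarD AcarD Isum_car tmap_car)
  next
    case (12 m r x) then show ?case
      by (simp add: fun_eq_iff Isum_ops Dsum_ops fD_def tmap_mult NC_assoc DcarD AcarD Isum_car tmap_car)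
  next
    case (13 p m x) then show ?case
      by (simp add: fun_eq_iff Areg_ops Dsum_ops fD_def tmap_mult tmap_chi chi_car NC_assoc DcarD AcarD Isum_car tmap_car)
  next
    case (14 s m x) then show ?case
      by (simp add: fun_eq_iff Areg_ops Isum_ops fD_def NC_assoc DcarD AcarD Isum_car tmap_car)
  next
    case (15 p t)
    have p: "p \<in> Asum_car" and t: "t \<in> Asum_car" using 15 by (auto simp: G2_def)
    show ?case unfolding Areg_ops G2_car
      by (intro Asum_closeI NC_mcar fin_ml[of p "\<lambda>n. n" t] AcarD[OF p] AcarD[OF t] AfinD[OF t])
  next
    case (16 p t t') then show ?case
      by (simp add: fun_eq_iff Areg_ops G2_def NC_rdistr AcarD)
  next
    case (17 s t)
    have s: "s \<in> Asum_car" and t: "t \<in> Asum_car" using 17 by (auto simp: G2_def)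
    show ?case unfolding Areg_ops G2_car
      by (intro Asum_closeI NC_mcar fin_mr[of t "\<lambda>n. n" s] AcarD[OF s] AcarD[OF t] AfinD[OF t])
  next
    case (18 s t t') then show ?case
      by (simp add: fun_eq_iff Areg_ops G2_def NC_ldistr AcarD)
  next
    case (19 t) then show ?case by (simp add: G2_def ee_car Isum_car)
  next
    case (20 t) then show ?case using ee_f[of t] by (simp add: G2_def fD_def)
  next
    case (21 m x) then show ?case using psi_simple2[of m x] by (simp add: Isum_car)
  next
    case (22 t t') then show ?case using psi_add2[of t t'] by (simp add: G2_def)
  qed
  show ?thesis by (rule iso)
qed


theorem mainTheorem11:
  shows "(\<forall>n::nat. \<exists>\<phi>. bimod_iso (carrier (NC n)) (carrier (NC n))
                         (tensor (carrier (NC (Suc n))) (Dmod n) (Imod n)) (regular (NC n)) \<phi>)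
       \<and> (\<exists>\<psi>. bimod_iso Asum_car Asum_car (tensor Asum_car Dsum Isum) Areg \<psi>)"
  using part1 part2 by blast

end
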